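(* For $n\ge 6$ consider partitions of $n$ with parts $q_1\ge q_2\ge\dots\ge q_h$ such that $h\ge 4$, $q_j-q_{j+1}\in\{0,1\}$ for all $1\le j<h$, $q_1=q_2$, and $q_{h-2}=3$, $q_{h-1}=2$, $q_h=1$. Let $e'(n)$ (resp. $o'(n)$) be the number of such partitions with an even (resp. odd) number $h$ of parts. For an integer $t$ put $P_1(t)=\tfrac12(3t^2+t+4)$, $P_2(t)=\tfrac12(3(t+1)^2-t-1)$, $P_3(t)=\tfrac12(3(t+1)^2-t+3)$, $P_4(t)=\tfrac12(3(t+1)^2+t+1)$. Then for every integer $n\ge 6$: (a) $e'(n)=o'(n)$ if $n\notin\{P_1(t),P_2(t),P_3(t),P_4(t)\}$ for every integer $t\ge 2$; (b) $e'(n)=o'(n)+1$ if $n=P_1(t)$ or $n=P_4(t)$ for some integer $t\ge 2$; (c) $e'(n)=o'(n)-1$ if $n=P_2(t)$ or $n=P_3(t)$ for some integer $t\ge 2$. *)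

theory Defs
  imports Main
begin

text \<open>A partition is represented by the list q = [q_1, ..., q_h] of its parts
(index j in the list corresponds to q_(j+1)).  Consecutive differences in {0,1}
make the list weakly decreasing, and q_h = 1 makes all parts positive.\<close>

definition good_partition :: "nat \<Rightarrow> nat list \<Rightarrow> bool" where
  "good_partition n q \<longleftrightarrow>
     sum_list q = n \<and> length q \<ge> 4 \<and>
     (\<forall>j. j + 1 < length q \<longrightarrow> q ! j - q ! (j+1) \<in> {0,1} \<and> q ! j \<ge> q ! (j+1)) \<and>
     q ! 0 = q ! 1 \<and>
     q ! (length q - 3) = 3 \<and> q ! (length q - 2) = 2 \<and> q ! (length q - 1) = 1"

definition e' :: "nat \<Rightarrow> nat" where
  "e' n = card {q. good_partition n q \<and> even (length q)}"

definition o' :: "nat \<Rightarrow> nat" where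
  "o' n = card {q. good_partition n q \<and> odd (length q)}"

text \<open>The numerators below are always even, so div 2 is exact division.\<close>
definition P1 :: "int \<Rightarrow> int" where "P1 t = (3*t^2 + t + 4) div 2"
definition P2 :: "int \<Rightarrow> int" where "P2 t = (3*(t+1)^2 - t - 1) div 2"
definition P3 :: "int \<Rightarrow> int" where "P3 t = (3*(t+1)^2 - t + 3) div 2"
definition P4 :: "int \<Rightarrow> int" where "P4 t = (3*(t+1)^2 + t + 1) div 2"

end

theory Submission
  imports Defs
begin


definition wt :: "nat list \<Rightarrow> nat" where
  "wt c = (\<Sum>i<length c. Suc i * c ! i)"

lemma wt_Nil[simp]: "wt [] = 0" by (simp add: wt_def)

lemma wt_snoc: "wt (c @ [x]) = wt c + Suc (length c) * x"
  unfolding wt_def by (simp add: nth_append)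

lemma wt_update: "i < length c \<Longrightarrow> wt (c[i := v]) + Suc i * (c ! i) = wt c + Suc i * v"
proof -
  assume i: "i < length c"
  have "wt (c[i := v]) = (\<Sum>j\<in>{..<length c} - {i}. Suc j * c ! j) + Suc i * v"
    unfolding wt_def using i
    by (simp add: sum.remove[of "{..<length c}" i] nth_list_update)
  moreover have "wt c = (\<Sum>j\<in>{..<length c} - {i}. Suc j * c ! j) + Suc i * c ! i"
    unfolding wt_def using i by (simp add: sum.remove[of "{..<length c}" i])
  ultimately show ?thesis by simp
qed

lemma wt_butlast: "c \<noteq> [] \<Longrightarrow> wt c = wt (butlast c) + length c * last c"
proof -
  assume "c \<noteq> []"
  then have "c = butlast c @ [last c]" by simp
  have "wt (butlast c @ [last c]) = wt (butlast c) + Suc (length (butlast c)) * last c"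
    by (rule wt_snoc)
  then show ?thesis using \<open>c \<noteq> []\<close> by simp
qed

lemma sum_list_upd: "i < length (c::nat list) \<Longrightarrow> sum_list (c[i := v]) + c ! i = sum_list c + v"
proof -
  assume i: "i < length c"
  then have "c ! i \<le> sum_list c" by (simp add: member_le_sum_list)
  then show ?thesis using sum_list_update[OF i, of v] by simp
qed

fun rr :: "nat list \<Rightarrow> nat" where
  "rr [] = 0"
| "rr [x] = 1"
| "rr (x # y # ys) = (if x = 1 then Suc (rr (y # ys)) else 1)"

lemma rr_props: "c \<noteq> [] \<Longrightarrow> 1 \<le> rr c \<and> rr c \<le> length c \<and> (\<forall>i. i + 1 < rr c \<longrightarrow> c ! i = 1)
   \<and> (rr c < length c \<longrightarrow> c ! (rr c - 1) \<noteq> 1)"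
proof (induction c rule: rr.induct)
  case (3 x y ys)
  then show ?case
    apply (cases "x = 1")
     apply (auto simp: nth_Cons split: nat.splits)
    done
qed auto

lemma rr_unique: "1 \<le> k \<Longrightarrow> k \<le> length c \<Longrightarrow> (\<forall>i. i + 1 < k \<longrightarrow> c ! i = 1) \<Longrightarrow>
   (k = length c \<or> c ! (k - 1) \<noteq> 1) \<Longrightarrow> rr c = k"
proof (induction c arbitrary: k rule: rr.induct)
  case (3 x y ys)
  show ?case
  proof (cases "k = 1")
    case True
    then show ?thesis using 3 by auto
  next
    case False
    then have x1: "x = 1" using 3(4)[rule_format, of 0] 3(2) by auto
    have A: "\<forall>i. i + 1 < k - 1 \<longrightarrow> (y # ys) ! i = 1"
    proof (intro allI impI)
      fix i assume "i + 1 < k - 1"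
      then have "Suc i + 1 < k" by simp
      then have "(x # y # ys) ! Suc i = 1" using 3(4) by blast
      then show "(y # ys) ! i = 1" by simp
    qed
    have B: "k - 1 = length (y # ys) \<or> (y # ys) ! (k - 1 - 1) \<noteq> 1"
    proof -
      have "k - 1 = Suc (k - 1 - 1)" using False 3(2) by simp
      then have "(x # y # ys) ! (k - 1) = (y # ys) ! (k - 1 - 1)" by (metis nth_Cons_Suc)
      then show ?thesis using 3(5) by auto
    qed
    have "rr (y # ys) = k - 1"
      apply (rule 3(1)[OF x1])
      using 3(2,3) False A B by auto
    then show ?thesis using x1 False 3(2) by simp
  qed
qed auto

lemma rr_ge: "1 \<le> k \<Longrightarrow> k \<le> length c \<Longrightarrow> (\<forall>i. i + 1 < k \<longrightarrow> c ! i = 1) \<Longrightarrow> k \<le> rr c"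
proof (induction c arbitrary: k rule: rr.induct)
  case (3 x y ys)
  show ?case
  proof (cases "k = 1")
    case True
    then show ?thesis using rr_props[of "x#y#ys"] by auto
  next
    case False
    then have x1: "x = 1" using 3(4)[rule_format, of 0] 3(2) by auto
    have A: "\<forall>i. i + 1 < k - 1 \<longrightarrow> (y # ys) ! i = 1"
    proof (intro allI impI)
      fix i assume "i + 1 < k - 1"
      then have "Suc i + 1 < k" by simp
      then have "(x # y # ys) ! Suc i = 1" using 3(4) by blast
      then show "(y # ys) ! i = 1" by simp
    qed
    have "k - 1 \<le> rr (y # ys)"
      apply (rule 3(1)[OF x1])
      using 3(2,3) False A by auto
    then show ?thesis using x1 False 3(2) by simp
  qed
qed auto


definition Hs :: "nat \<Rightarrow> nat list set" where
  "Hs n = {c. 3 \<le> length c \<and> c ! 0 = 1 \<and> c ! 1 = 1 \<and> (\<forall>x\<in>set c. 1 \<le> x) \<and> 3 \<le> last c \<and> wt c = n}"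

definition moveA :: "nat list \<Rightarrow> nat list" where
  "moveA c = (let m = length c; s = last c; d = (butlast c)[m - 2 := c ! (m - 2) + s]
              in d[s - 1 := d ! (s - 1) + 1])"

definition moveB :: "nat list \<Rightarrow> nat list" where
  "moveB c = (let m = length c; r = rr c; e = c[r - 1 := c ! (r - 1) - 1]
              in e[m - 1 := e ! (m - 1) - r] @ [r])"

definition FF :: "nat list \<Rightarrow> nat list" where
  "FF c = (let m = length c; s = last c; r = rr c in
     if s \<le> r then (if r = m \<and> s = m then c else moveA c)
     else (if r = m \<and> s = m + 1 then c else moveB c))"

lemma last_nth': "c \<noteq> [] \<Longrightarrow> last c = c ! (length c - 1)"
  by (simp add: last_conv_nth)

lemma moveA_len: "2 \<le> length c \<Longrightarrow> length (moveA c) = length c - 1"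
  by (simp add: moveA_def Let_def)

lemma moveA_nth:
  assumes "2 \<le> length c" "1 \<le> last c" "last c \<le> length c - 1" "i < length c - 1"
  shows "moveA c ! i = c ! i + (if i = length c - 2 then last c else 0) + (if i = last c - 1 then 1 else 0)"
  using assms by (auto simp: moveA_def Let_def nth_list_update nth_butlast)

lemma moveB_len: "length (moveB c) = Suc (length c)"
  by (simp add: moveB_def Let_def)

lemma moveB_nth:
  assumes "c \<noteq> []" "1 \<le> rr c" "rr c \<le> length c" "i < length c"
  shows "moveB c ! i = (if i = length c - 1 then (c ! i - (if i = rr c - 1 then 1 else 0)) - rr c
                        else c ! i - (if i = rr c - 1 then 1 else 0))"
  using assms by (auto simp: moveB_def Let_def nth_list_update nth_append)

lemma moveB_last: "moveB c ! length c = rr c"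
  by (simp add: moveB_def Let_def nth_append)


lemma Hs_basic:
  assumes "c \<in> Hs n"
  shows "c \<noteq> []" "3 \<le> length c" "c ! 0 = 1" "c ! 1 = 1" "\<And>i. i < length c \<Longrightarrow> 1 \<le> c ! i"
    "3 \<le> last c" "wt c = n" "3 \<le> rr c" "rr c \<le> length c" "\<And>i. i + 1 < rr c \<Longrightarrow> c ! i = 1"
    "rr c < length c \<Longrightarrow> 2 \<le> c ! (rr c - 1)"
proof -
  have H: "3 \<le> length c" "c ! 0 = 1" "c ! 1 = 1" "\<forall>x\<in>set c. 1 \<le> x" "3 \<le> last c" "wt c = n"
    using assms by (auto simp: Hs_def)
  show ne: "c \<noteq> []" using H by auto
  show "3 \<le> length c" "c ! 0 = 1" "c ! 1 = 1" "3 \<le> last c" "wt c = n" using H by auto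
  show el: "\<And>i. i < length c \<Longrightarrow> 1 \<le> c ! i" using H(4) by auto
  have R: "1 \<le> rr c \<and> rr c \<le> length c \<and> (\<forall>i. i + 1 < rr c \<longrightarrow> c ! i = 1)
   \<and> (rr c < length c \<longrightarrow> c ! (rr c - 1) \<noteq> 1)" using rr_props[OF ne] .
  show "rr c \<le> length c" "\<And>i. i + 1 < rr c \<Longrightarrow> c ! i = 1" using R by auto
  show "rr c < length c \<Longrightarrow> 2 \<le> c ! (rr c - 1)"
  proof -
    assume "rr c < length c"
    then have "c ! (rr c - 1) \<noteq> 1" "rr c - 1 < length c" using R by auto
    then show ?thesis using el by force
  qed
  show "3 \<le> rr c"
  proof (rule rr_ge)
    show "\<forall>i. i + 1 < 3 \<longrightarrow> c ! i = 1"
    proof (intro allI impI)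
      fix i assume "i + 1 < (3::nat)"
      then have "i = 0 \<or> i = 1" by auto
      then show "c ! i = 1" using H by auto
    qed
  qed (use H in auto)
qed

lemma sum_list_butlast: "c \<noteq> [] \<Longrightarrow> sum_list c = sum_list (butlast c) + last c"
proof -
  assume "c \<noteq> []"
  have "sum_list (butlast c @ [last c]) = sum_list (butlast c) + last c" by simp
  then show ?thesis using \<open>c \<noteq> []\<close> by simp
qed

lemma caseA:
  assumes c: "c \<in> Hs n" and sr: "last c \<le> rr c" and nf: "\<not> (rr c = length c \<and> last c = length c)"
  shows "moveA c \<in> Hs n" "sum_list (moveA c) = Suc (sum_list c)" "FF (moveA c) = c"
proof -
  note B = Hs_basic[OF c]
  define m where "m = length c"
  define s where "s = last c"
  define r where "r = rr c"
  have s3: "3 \<le> s" and m3: "3 \<le> m" and sm: "s \<le> m - 1" and sr': "s \<le> r" and rm: "r \<le> m"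
    using B sr nf by (auto simp: s_def m_def r_def)
  define c' where "c' = moveA c"
  have lenc': "length c' = m - 1" using moveA_len B by (simp add: c'_def m_def)
  have nthc': "\<And>i. i < m - 1 \<Longrightarrow> c' ! i = c ! i + (if i = m - 2 then s else 0) + (if i = s - 1 then 1 else 0)"
    unfolding c'_def m_def s_def using moveA_nth B sm s3 m3 by (simp add: m_def s_def)
  have ones: "\<And>i. i + 1 < s \<Longrightarrow> c' ! i = 1"
  proof -
    fix i assume "i + 1 < s"
    then have "c ! i = 1" "i < m - 1" "i \<noteq> m - 2" "i \<noteq> s - 1" using B(10) sr' sm by (auto simp: r_def)
    then show "c' ! i = 1" using nthc' by simp
  qed
  have c'0: "c' ! 0 = 1" and c'1: "c' ! 1 = 1" using ones s3 by auto
  have el: "\<forall>x\<in>set c'. 1 \<le> x"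
  proof
    fix x assume "x \<in> set c'"
    then obtain i where i: "i < m - 1" "x = c' ! i" using lenc' by (auto simp: in_set_conv_nth)
    have "1 \<le> c ! i" using B(5)[of i] i by (simp add: m_def)
    then show "1 \<le> x" using nthc'[OF i(1)] i(2) by simp
  qed
  have lastc': "last c' = c ! (m - 2) + s + (if m - 2 = s - 1 then 1 else 0)"
  proof -
    have ne': "c' \<noteq> []" using lenc' m3 by auto
    have "last c' = c' ! (m - 2)" using last_nth'[OF ne'] lenc' by (simp add: diff_diff_left numeral_2_eq_2)
    moreover have "m - 2 < m - 1" using m3 by simp
    ultimately show ?thesis using nthc'[of "m - 2"] by simp
  qed
  have cm2: "1 \<le> c ! (m - 2)" using B(5)[of "m - 2"] m3 by (simp add: m_def)
  have wtc': "wt c' = n"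
  proof -
    define b where "b = butlast c"
    define d where "d = b[m - 2 := c ! (m - 2) + s]"
    have lb: "length b = m - 1" by (simp add: b_def m_def)
    have bm2: "b ! (m - 2) = c ! (m - 2)" using m3 by (simp add: b_def nth_butlast m_def)
    have c'd: "c' = d[s - 1 := d ! (s - 1) + 1]"
      by (simp add: c'_def moveA_def Let_def d_def b_def m_def s_def)
    have w1: "wt c = wt b + m * s" using wt_butlast[OF B(1)] by (simp add: b_def m_def s_def)
    have m2: "Suc (m - 2) = m - 1" and s1: "Suc (s - 1) = s" using m3 s3 by auto
    have "m - 2 < length b" using lb m3 by simp
    from wt_update[OF this, of "c ! (m - 2) + s"]
    have w2: "wt d + (m - 1) * c ! (m - 2) = wt b + (m - 1) * (c ! (m - 2) + s)"
      unfolding d_def[symmetric] bm2 m2 .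
    have "s - 1 < length d" using lb sm s3 by (simp add: d_def)
    from wt_update[OF this, of "d ! (s - 1) + 1"]
    have w3: "wt c' + s * d ! (s - 1) = wt d + s * (d ! (s - 1) + 1)"
      unfolding c'd[symmetric] s1 .
    have "wt c' = wt d + s" using w3 by (simp add: algebra_simps)
    moreover have "wt d = wt b + (m - 1) * s" using w2 by (simp add: algebra_simps)
    moreover have "(m - 1) * s + s = m * s" using m3 by (cases m) auto
    ultimately show ?thesis using w1 B(7) by simp
  qed
  show "moveA c \<in> Hs n"
    using lenc' c'0 c'1 el lastc' wtc' sm s3 unfolding Hs_def c'_def[symmetric] by simp
  show "sum_list (moveA c) = Suc (sum_list c)"
  proof -
    define b where "b = butlast c"
    define d where "d = b[m - 2 := c ! (m - 2) + s]"
    have lb: "length b = m - 1" by (simp add: b_def m_def)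
    have bm2: "b ! (m - 2) = c ! (m - 2)" using m3 by (simp add: b_def nth_butlast m_def)
    have c'd: "c' = d[s - 1 := d ! (s - 1) + 1]"
      by (simp add: c'_def moveA_def Let_def d_def b_def m_def s_def)
    have w1: "sum_list c = sum_list b + s" using sum_list_butlast[OF B(1)] by (simp add: b_def s_def)
    have w2: "sum_list d + c ! (m - 2) = sum_list b + (c ! (m - 2) + s)"
      using sum_list_upd[of "m - 2" b "c ! (m - 2) + s"] lb m3 bm2 by (simp add: d_def)
    have w3: "sum_list c' + d ! (s - 1) = sum_list d + (d ! (s - 1) + 1)"
      using sum_list_upd[of "s - 1" d "d ! (s - 1) + 1"] lb sm s3 by (simp add: c'd d_def)
    show ?thesis using w1 w2 w3 by (simp add: c'_def[symmetric])
  qed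
  show "FF (moveA c) = c"
  proof -
    have rc': "rr c' = s"
    proof (rule rr_unique)
      show "1 \<le> s" "s \<le> length c'" using s3 lenc' sm by auto
      show "\<forall>i. i + 1 < s \<longrightarrow> c' ! i = 1" using ones by auto
      have "s - 1 < m - 1" using sm s3 by auto
      moreover have "1 \<le> c ! (s - 1)" using B(5)[of "s - 1"] sm s3 by (auto simp: m_def)
      ultimately have "c' ! (s - 1) \<noteq> 1" using nthc'[of "s - 1"] by auto
      then show "s = length c' \<or> c' ! (s - 1) \<noteq> 1" by blast
    qed
    have "s < last c'" using lastc' cm2 by auto
    moreover have "\<not> (rr c' = length c' \<and> last c' = length c' + 1)"
      using rc' lenc' lastc' cm2 by auto
    ultimately have FB: "FF c' = moveB c'" using rc' by (auto simp: FF_def Let_def)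
    have ne': "c' \<noteq> []" using lenc' m3 by auto
    show ?thesis unfolding c'_def[symmetric] FB
    proof (rule nth_equalityI)
      show "length (moveB c') = length c" using moveB_len lenc' m3 by (simp add: m_def)
      fix i assume "i < length (moveB c')"
      then have i: "i < m" using moveB_len lenc' m3 by (simp add: m_def)
      show "moveB c' ! i = c ! i"
      proof (cases "i = m - 1")
        case True
        then have "moveB c' ! i = rr c'" using moveB_last[of c'] lenc' by simp
        then show ?thesis using True rc' by (simp add: s_def m_def last_nth'[OF B(1)])
      next
        case False
        then have i': "i < length c'" using i lenc' by simp
        have "moveB c' ! i = (if i = length c' - 1 then (c' ! i - (if i = rr c' - 1 then 1 else 0)) - rr c'
                        else c' ! i - (if i = rr c' - 1 then 1 else 0))"
          by (rule moveB_nth[OF ne' _ _ i']) (use rc' s3 lenc' sm in auto)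
        also have "\<dots> = c ! i" using nthc'[OF i'[unfolded lenc']] rc' lenc' by auto
        finally show ?thesis .
      qed
    qed
  qed
qed


lemma caseB:
  assumes c: "c \<in> Hs n" and sr: "rr c < last c" and nf: "\<not> (rr c = length c \<and> last c = length c + 1)"
  shows "moveB c \<in> Hs n" "Suc (sum_list (moveB c)) = sum_list c" "FF (moveB c) = c"
proof -
  note B = Hs_basic[OF c]
  define m where "m = length c"
  define s where "s = last c"
  define r where "r = rr c"
  have r3: "3 \<le> r" and m3: "3 \<le> m" and rs: "r < s" and rm: "r \<le> m"
    using B sr by (auto simp: s_def m_def r_def)
  have rm2: "r = m \<Longrightarrow> m + 2 \<le> s" using nf sr by (auto simp: s_def m_def r_def)
  have cs: "c ! (m - 1) = s" using last_nth'[OF B(1)] by (simp add: s_def m_def)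
  have cr: "r < m \<Longrightarrow> 2 \<le> c ! (r - 1)" using B(11) by (simp add: r_def m_def)
  define c' where "c' = moveB c"
  have lenc': "length c' = Suc m" using moveB_len by (simp add: c'_def m_def)
  have nthc': "\<And>i. i < m \<Longrightarrow> c' ! i = (if i = m - 1 then (c ! i - (if i = r - 1 then 1 else 0)) - r
                        else c ! i - (if i = r - 1 then 1 else 0))"
    unfolding c'_def m_def r_def using moveB_nth B by (simp add: m_def r_def)
  have lastc': "c' ! m = r" using moveB_last by (simp add: c'_def m_def r_def)
  have good: "\<And>i. i < m \<Longrightarrow> c' ! i + (if i = r - 1 then 1 else 0) + (if i = m - 1 then r else 0) = c ! i
     \<and> 1 \<le> c' ! i"
  proof -
    fix i assume i: "i < m"
    have ci: "1 \<le> c ! i" using B(5) i by (simp add: m_def)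
    show "c' ! i + (if i = r - 1 then 1 else 0) + (if i = m - 1 then r else 0) = c ! i \<and> 1 \<le> c' ! i"
    proof (cases "i = m - 1")
      case True
      show ?thesis
      proof (cases "r = m")
        case True
        then show ?thesis using \<open>i = m - 1\<close> nthc'[OF i] cs rm2 by auto
      next
        case False
        then have "i \<noteq> r - 1" using \<open>i = m - 1\<close> rm r3 by auto
        then show ?thesis using \<open>i = m - 1\<close> nthc'[OF i] cs rs by auto
      qed
    next
      case False
      show ?thesis
      proof (cases "i = r - 1")
        case True
        then have "r < m" using False rm r3 by auto
        then show ?thesis using True False nthc'[OF i] cr by auto
      next
        case False
        then show ?thesis using \<open>i \<noteq> m - 1\<close> nthc'[OF i] ci by auto
      qed
    qed
  qed
  have ones: "\<And>i. i + 1 < r \<Longrightarrow> c' ! i = 1"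
  proof -
    fix i assume i: "i + 1 < r"
    then have "i < m" "i \<noteq> r - 1" "i \<noteq> m - 1" using rm by auto
    then show "c' ! i = 1" using good[of i] B(10)[of i] i by (simp add: r_def)
  qed
  have c'0: "c' ! 0 = 1" and c'1: "c' ! 1 = 1" using ones r3 by auto
  have el: "\<forall>x\<in>set c'. 1 \<le> x"
  proof
    fix x assume "x \<in> set c'"
    then obtain i where i: "i < Suc m" "x = c' ! i" using lenc' by (auto simp: in_set_conv_nth)
    show "1 \<le> x"
    proof (cases "i = m")
      case True then show ?thesis using i lastc' r3 by simp
    next
      case False then show ?thesis using i good[of i] by simp
    qed
  qed
  have "c' \<noteq> []" using lenc' by auto
  then have lc': "last c' = r" using last_nth'[of c'] lenc' lastc' by simp
  define e where "e = c[r - 1 := c ! (r - 1) - 1]"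
  define e2 where "e2 = e[m - 1 := e ! (m - 1) - r]"
  have c'e: "c' = e2 @ [r]" by (simp add: c'_def moveB_def Let_def e_def e2_def m_def r_def)
  have le: "length e = m" "length e2 = m" by (simp_all add: e_def e2_def m_def)
  have a1: "1 \<le> c ! (r - 1)" using B(5)[of "r - 1"] rm r3 by (simp add: m_def)
  have eb: "r \<le> e ! (m - 1)"
  proof (cases "r = m")
    case True then show ?thesis using rm2 cs m3 by (simp add: e_def m_def)
  next
    case False then have "m - 1 \<noteq> r - 1" using rm r3 by auto
    then show ?thesis using cs rs m3 by (simp add: e_def m_def)
  qed
  have r1: "Suc (r - 1) = r" and m1: "Suc (m - 1) = m" using r3 m3 by auto
  have wtc': "wt c' = n"
  proof -
    have "r - 1 < length c" using rm r3 by (simp add: m_def)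
    from wt_update[OF this, of "c ! (r - 1) - 1"]
    have w1: "wt e + r * c ! (r - 1) = wt c + r * (c ! (r - 1) - 1)" unfolding e_def[symmetric] r1 .
    have "m - 1 < length e" using le m3 by simp
    from wt_update[OF this, of "e ! (m - 1) - r"]
    have w2: "wt e2 + m * e ! (m - 1) = wt e + m * (e ! (m - 1) - r)" unfolding e2_def[symmetric] m1 .
    have w3: "wt c' = wt e2 + Suc m * r" using wt_snoc[of e2 r] le c'e by simp
    have x1: "r * c ! (r - 1) = r * (c ! (r - 1) - 1) + r"
    proof -
      obtain a where "c ! (r - 1) = Suc a" using a1 by (cases "c ! (r - 1)") auto
      then show ?thesis by simp
    qed
    have x2: "m * e ! (m - 1) = m * (e ! (m - 1) - r) + m * r"
    proof -
      obtain d where "e ! (m - 1) = r + d" using eb le_iff_add by blast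
      then show ?thesis by (simp add: algebra_simps)
    qed
    have "wt e + r = wt c" using w1 x1 by simp
    moreover have "wt e2 + m * r = wt e" using w2 x2 by simp
    ultimately show ?thesis using w3 B(7) by simp
  qed
  have slc': "Suc (sum_list c') = sum_list c"
  proof -
    have "r - 1 < length c" using rm r3 by (simp add: m_def)
    from sum_list_upd[OF this, of "c ! (r - 1) - 1"]
    have w1: "sum_list e + c ! (r - 1) = sum_list c + (c ! (r - 1) - 1)" unfolding e_def[symmetric] .
    have "m - 1 < length e" using le m3 by simp
    from sum_list_upd[OF this, of "e ! (m - 1) - r"]
    have w2: "sum_list e2 + e ! (m - 1) = sum_list e + (e ! (m - 1) - r)" unfolding e2_def[symmetric] .
    have w3: "sum_list c' = sum_list e2 + r" using c'e by simp
    show ?thesis using w1 w2 w3 a1 eb by simp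
  qed
  show "moveB c \<in> Hs n"
    using lenc' c'0 c'1 el lc' wtc' r3 m3 unfolding Hs_def c'_def[symmetric] by simp
  show "Suc (sum_list (moveB c)) = sum_list c" using slc' by (simp add: c'_def)
  show "FF (moveB c) = c"
  proof -
    have rge: "r \<le> rr c'"
      by (rule rr_ge) (use r3 lenc' rm ones in auto)
    have FA: "FF c' = moveA c'" using rge lc' lenc' rm by (auto simp: FF_def Let_def)
    show ?thesis unfolding c'_def[symmetric] FA
    proof (rule nth_equalityI)
      show "length (moveA c') = length c" using moveA_len lenc' m3 by (simp add: m_def)
      fix i assume "i < length (moveA c')"
      then have i: "i < m" using moveA_len lenc' m3 by (simp add: m_def)
      have "moveA c' ! i = c' ! i + (if i = length c' - 2 then last c' else 0) + (if i = last c' - 1 then 1 else 0)"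
        by (rule moveA_nth) (use lenc' lc' r3 rm m3 i in auto)
      also have "\<dots> = c' ! i + (if i = r - 1 then 1 else 0) + (if i = m - 1 then r else 0)"
        using lenc' lc' by simp
      also have "\<dots> = c ! i" using good[OF i] by simp
      finally show "moveA c' ! i = c ! i" .
    qed
  qed
qed


definition lsg :: "nat list \<Rightarrow> int" where "lsg c = (-1) ^ sum_list c"

lemma FF_props:
  assumes c: "c \<in> Hs n"
  shows "FF c \<in> Hs n" "FF (FF c) = c" "FF c \<noteq> c \<Longrightarrow> lsg (FF c) = - lsg c"
    "FF c = c \<longleftrightarrow> rr c = length c \<and> (last c = length c \<or> last c = length c + 1)"
proof -
  consider (fixA) "last c \<le> rr c" "rr c = length c \<and> last c = length c"
    | (A) "last c \<le> rr c" "\<not> (rr c = length c \<and> last c = length c)"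
    | (fixB) "\<not> last c \<le> rr c" "rr c = length c \<and> last c = length c + 1"
    | (B) "\<not> last c \<le> rr c" "\<not> (rr c = length c \<and> last c = length c + 1)"
    by blast
  then have "FF c \<in> Hs n \<and> FF (FF c) = c \<and> (FF c \<noteq> c \<longrightarrow> lsg (FF c) = - lsg c)
    \<and> (FF c = c \<longleftrightarrow> rr c = length c \<and> (last c = length c \<or> last c = length c + 1))"
  proof cases
    case fixA
    then have "FF c = c" using fixA by (auto simp: FF_def Let_def)
    then show ?thesis using c fixA by simp
  next
    case A
    then have F: "FF c = moveA c" using A by (auto simp: FF_def Let_def)
    note cA = caseA[OF c A]
    have ne: "FF c \<noteq> c" using cA(2) F by (metis n_not_Suc_n)
    have "\<not> (rr c = length c \<and> (last c = length c \<or> last c = length c + 1))"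
      using A by auto
    then show ?thesis using cA F ne by (simp add: lsg_def)
  next
    case fixB
    then have "FF c = c" using fixB by (auto simp: FF_def Let_def)
    then show ?thesis using c fixB by simp
  next
    case B
    then have F: "FF c = moveB c" using B by (auto simp: FF_def Let_def)
    have B': "rr c < last c" using B by simp
    note cB = caseB[OF c B' B(2)]
    have ne: "FF c \<noteq> c" using cB(2) F by (metis n_not_Suc_n)
    have "\<not> (rr c = length c \<and> (last c = length c \<or> last c = length c + 1))"
      using B by auto
    moreover have "lsg (FF c) = - lsg c" using cB(2) F by (simp add: lsg_def flip: cB(2))
    ultimately show ?thesis using cB F ne by simp
  qed
  then show "FF c \<in> Hs n" "FF (FF c) = c" "FF c \<noteq> c \<Longrightarrow> lsg (FF c) = - lsg c"
    "FF c = c \<longleftrightarrow> rr c = length c \<and> (last c = length c \<or> last c = length c + 1)" by auto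
qed

lemma invol_sum:
  fixes g :: "'a \<Rightarrow> int"
  assumes "finite S" "\<And>x. x \<in> S \<Longrightarrow> f x \<in> S" "\<And>x. x \<in> S \<Longrightarrow> f (f x) = x"
    "\<And>x. x \<in> S \<Longrightarrow> f x \<noteq> x \<Longrightarrow> g (f x) = - g x"
  shows "sum g S = sum g {x\<in>S. f x = x}"
proof -
  define T where "T = {x\<in>S. f x \<noteq> x}"
  have fT: "finite T" using assms(1) by (simp add: T_def)
  have bij: "bij_betw f T T"
    apply (rule bij_betw_byWitness[where f' = f])
    using assms(2,3) by (auto simp: T_def)
  have "sum g T = sum (g \<circ> f) T" using sum.reindex_bij_betw[OF bij, of g] by simp
  also have "\<dots> = sum (\<lambda>x. - g x) T" by (rule sum.cong) (auto simp: T_def assms(4))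
  also have "\<dots> = - sum g T" by (simp add: sum_negf)
  finally have "sum g T = 0" by simp
  moreover have "S = {x\<in>S. f x = x} \<union> T" "{x\<in>S. f x = x} \<inter> T = {}" by (auto simp: T_def)
  ultimately show ?thesis using assms(1)
    by (metis (no_types, lifting) add.right_neutral finite_Un sum.union_disjoint)
qed

lemma fixed_shape:
  assumes "c \<noteq> []" "rr c = length c"
  shows "c = replicate (length c - 1) 1 @ [last c]"
proof (rule nth_equalityI)
  show "length c = length (replicate (length c - 1) 1 @ [last c])" using assms by simp
  fix i assume "i < length c"
  show "c ! i = (replicate (length c - 1) 1 @ [last c]) ! i"
  proof (cases "i = length c - 1")
    case True then show ?thesis using assms by (simp add: nth_append last_conv_nth)
  next
    case False
    then have "i + 1 < rr c" using assms \<open>i < length c\<close> by simp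
    then have "c ! i = 1" using rr_props[OF assms(1)] by blast
    moreover have "i < length c - 1" using False \<open>i < length c\<close> by simp
    ultimately show ?thesis by (simp add: nth_append)
  qed
qed

lemma wt_rep: "2 * wt (replicate j 1) = j * (j + 1)"
proof (induction j)
  case (Suc j)
  have "replicate (Suc j) (1::nat) = replicate j 1 @ [1]" by (simp add: replicate_append_same)
  then have "wt (replicate (Suc j) 1) = wt (replicate j 1) + Suc j" by (simp add: wt_snoc)
  then show ?case using Suc by simp
qed simp

lemma wt_fix: "k \<ge> 1 \<Longrightarrow> 2 * wt (replicate (k - 1) 1 @ [x]) = (k - 1) * k + 2 * k * x"
  using wt_rep[of "k - 1"] by (simp add: wt_snoc)

lemma sum_fix: "sum_list (replicate (k - 1) (1::nat) @ [x]) = k - 1 + x"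
  by (simp add: sum_list_replicate)


lemma sum_le_wt: "sum_list c \<le> wt c"
  unfolding wt_def sum_list_sum_nth atLeast0LessThan[symmetric] lessThan_atLeast0
  by (rule sum_mono) simp

lemma len_le_sum: "\<forall>x\<in>set c. 1 \<le> x \<Longrightarrow> length c \<le> sum_list (c::nat list)"
  by (induction c) auto

lemma finite_wt: "finite {c. (\<forall>x\<in>set c. 1 \<le> x) \<and> wt c = n}"
proof (rule finite_subset)
  show "{c. (\<forall>x\<in>set c. 1 \<le> x) \<and> wt c = n} \<subseteq> {c. set c \<subseteq> {0..n} \<and> length c \<le> n}"
  proof
    fix c assume "c \<in> {c. (\<forall>x\<in>set c. 1 \<le> x) \<and> wt c = n}"
    then have a: "\<forall>x\<in>set c. 1 \<le> x" "wt c = n" by auto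
    have "length c \<le> n" using len_le_sum[OF a(1)] sum_le_wt[of c] a(2) by simp
    moreover have "set c \<subseteq> {0..n}"
    proof
      fix x assume "x \<in> set c"
      then have "x \<le> sum_list c" by (simp add: member_le_sum_list)
      then show "x \<in> {0..n}" using sum_le_wt[of c] a(2) by simp
    qed
    ultimately show "c \<in> {c. set c \<subseteq> {0..n} \<and> length c \<le> n}" by simp
  qed
  show "finite {c. set c \<subseteq> {0..n} \<and> length c \<le> n}" by (rule finite_lists_length_le) simp
qed

lemma finite_Hs: "finite (Hs n)"
  by (rule finite_subset[OF _ finite_wt[of n]]) (auto simp: Hs_def)

definition fixA :: "nat \<Rightarrow> nat list" where "fixA k = replicate (k - 1) 1 @ [k + 1]"
definition fixB :: "nat \<Rightarrow> nat list" where "fixB k = replicate (k - 1) 1 @ [k]"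

lemma rr_rep: "k \<ge> 1 \<Longrightarrow> rr (replicate (k - 1) 1 @ [x]) = k"
  by (rule rr_unique) (auto simp: nth_append)

lemma fix_in_Hs: "3 \<le> k \<Longrightarrow> 3 \<le> x \<Longrightarrow> 2 * n = (k - 1) * k + 2 * k * x \<Longrightarrow> replicate (k - 1) 1 @ [x] \<in> Hs n"
proof -
  assume a: "3 \<le> k" "3 \<le> x" "2 * n = (k - 1) * k + 2 * k * x"
  have "wt (replicate (k - 1) 1 @ [x]) = n" using wt_fix[of k x] a by simp
  moreover have "(replicate (k - 1) 1 @ [x]) ! 0 = 1" "(replicate (k - 1) 1 @ [x]) ! 1 = 1"
    using a by (auto simp: nth_append)
  ultimately show ?thesis using a unfolding Hs_def by auto
qed

lemma Fx_char: "c \<in> Hs n \<and> FF c = c \<longleftrightarrow>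
  (\<exists>k\<ge>3. (c = fixA k \<and> 2 * n = k * (3 * k + 1)) \<or> (c = fixB k \<and> 2 * n = k * (3 * k - 1)))"
proof
  assume a: "c \<in> Hs n \<and> FF c = c"
  note B = Hs_basic[OF conjunct1[OF a]]
  define k where "k = length c"
  have k3: "3 \<le> k" using B by (simp add: k_def)
  have ff: "rr c = length c \<and> (last c = length c \<or> last c = length c + 1)"
    using FF_props(4)[OF conjunct1[OF a]] a by simp
  then have sh: "c = replicate (k - 1) 1 @ [last c]" using fixed_shape B(1) by (simp add: k_def)
  have w: "2 * n = (k - 1) * k + 2 * k * last c" using wt_fix[of k "last c"] sh B(7) k3 by simp
  show "\<exists>k\<ge>3. (c = fixA k \<and> 2 * n = k * (3 * k + 1)) \<or> (c = fixB k \<and> 2 * n = k * (3 * k - 1))"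
  proof (rule exI[of _ k], intro conjI k3)
    from ff show "(c = fixA k \<and> 2 * n = k * (3 * k + 1)) \<or> (c = fixB k \<and> 2 * n = k * (3 * k - 1))"
    proof
      assume "last c = length c \<or> last c = length c + 1"
      then show ?thesis
      proof
        assume l: "last c = length c"
        then have "c = fixB k" using sh by (simp add: fixB_def k_def)
        moreover have "2 * n = k * (3 * k - 1)" using w l k3 unfolding k_def[symmetric]
          by (simp add: algebra_simps diff_mult_distrib2)
        ultimately show ?thesis by simp
      next
        assume l: "last c = length c + 1"
        then have "c = fixA k" using sh by (simp add: fixA_def k_def)
        moreover have "2 * n = k * (3 * k + 1)" using w l k3 unfolding k_def[symmetric]
          by (simp add: algebra_simps diff_mult_distrib2)
        ultimately show ?thesis by simp
      qed
    qed
  qed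
next
  assume "\<exists>k\<ge>3. (c = fixA k \<and> 2 * n = k * (3 * k + 1)) \<or> (c = fixB k \<and> 2 * n = k * (3 * k - 1))"
  then obtain k where k: "3 \<le> k" "(c = fixA k \<and> 2 * n = k * (3 * k + 1)) \<or> (c = fixB k \<and> 2 * n = k * (3 * k - 1))"
    by blast
  from k(2) show "c \<in> Hs n \<and> FF c = c"
  proof
    assume a: "c = fixA k \<and> 2 * n = k * (3 * k + 1)"
    have "2 * n = (k - 1) * k + 2 * k * (k + 1)" using a k(1) by (simp add: algebra_simps diff_mult_distrib)
    then have H: "c \<in> Hs n" using fix_in_Hs[of k "k + 1" n] a k(1) by (simp add: fixA_def)
    have "rr c = length c" using rr_rep[of k "k + 1"] a k(1) by (simp add: fixA_def)
    moreover have "last c = length c + 1" using a k(1) by (simp add: fixA_def)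
    ultimately show ?thesis using H FF_props(4)[OF H] by simp
  next
    assume a: "c = fixB k \<and> 2 * n = k * (3 * k - 1)"
    have "2 * n = (k - 1) * k + 2 * k * k" using a k(1) by (simp add: algebra_simps diff_mult_distrib2)
    then have H: "c \<in> Hs n" using fix_in_Hs[of k "k" n] a k(1) by (simp add: fixB_def)
    have "rr c = length c" using rr_rep[of k "k"] a k(1) by (simp add: fixB_def)
    moreover have "last c = length c" using a k(1) by (simp add: fixB_def)
    ultimately show ?thesis using H FF_props(4)[OF H] by simp
  qed
qed


definition v1 :: "nat \<Rightarrow> nat" where "v1 t = t * (3 * t + 1) + 4"
definition v2 :: "nat \<Rightarrow> nat" where "v2 t = (t + 1) * (3 * t + 2)"
definition v3 :: "nat \<Rightarrow> nat" where "v3 t = (t + 1) * (3 * t + 2) + 4"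
definition v4 :: "nat \<Rightarrow> nat" where "v4 t = (t + 1) * (3 * t + 4)"

definition vv :: "nat \<Rightarrow> nat \<Rightarrow> nat" where
  "vv i t = (if i = 0 then v1 t else if i = 1 then v2 t else if i = 2 then v3 t else v4 t)"

definition VV :: "nat \<Rightarrow> nat" where "VV j = vv (j mod 4) (j div 4)"

lemma v12: "1 \<le> t \<Longrightarrow> v1 t < v2 t" by (simp add: v1_def v2_def algebra_simps)
lemma v23: "v2 t < v3 t" by (simp add: v2_def v3_def)
lemma v34: "2 \<le> t \<Longrightarrow> v3 t < v4 t" by (simp add: v3_def v4_def algebra_simps)
lemma v41: "v4 t < v1 (Suc t)" by (simp add: v4_def v1_def algebra_simps)

lemma dm4: "r < 4 \<Longrightarrow> (4 * t + r) div (4::nat) = t" "r < 4 \<Longrightarrow> (4 * t + r) mod 4 = r"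
  by simp_all

lemma VV_step: "8 \<le> j \<Longrightarrow> VV j < VV (Suc j)"
proof -
  assume j: "8 \<le> j"
  define t where "t = j div 4"
  define i where "i = j mod 4"
  have ji: "j = 4 * t + i" "i < 4" by (simp_all add: t_def i_def)
  have t2: "2 \<le> t" using j by (simp add: t_def)
  have jd: "j div 4 = t" "j mod 4 = i" by (simp_all add: t_def i_def)
  consider "i = 0" | "i = 1" | "i = 2" | "i = 3" using ji(2) by linarith
  then show ?thesis
  proof cases
    case 1
    have "Suc j = 4 * t + 1" using ji 1 by simp
    then have "Suc j div 4 = t" "Suc j mod 4 = 1" using dm4[of 1 t] by simp_all
    then show ?thesis using v12[of t] t2 jd 1 by (simp add: VV_def vv_def)
  next
    case 2
    have "Suc j = 4 * t + 2" using ji 2 by simp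
    then have "Suc j div 4 = t" "Suc j mod 4 = 2" using dm4[of 2 t] by simp_all
    then show ?thesis using v23[of t] jd 2 by (simp add: VV_def vv_def)
  next
    case 3
    have "Suc j = 4 * t + 3" using ji 3 by simp
    then have "Suc j div 4 = t" "Suc j mod 4 = 3" using dm4[of 3 t] by simp_all
    then show ?thesis using v34[of t] t2 jd 3 by (simp add: VV_def vv_def)
  next
    case 4
    have "Suc j = 4 * Suc t + 0" using ji 4 by simp
    then have "Suc j div 4 = Suc t" "Suc j mod 4 = 0" using dm4[of 0 "Suc t"] by simp_all
    then show ?thesis using v41[of t] jd 4 by (simp add: VV_def vv_def)
  qed
qed

lemma VV_mono: "8 \<le> j \<Longrightarrow> j < j' \<Longrightarrow> VV j < VV j'"
proof (induction j' rule: nat_induct)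
  case (Suc k)
  show ?case
  proof (cases "j = k")
    case True then show ?thesis using VV_step Suc by simp
  next
    case False
    then have "VV j < VV k" using Suc by simp
    also have "VV k < VV (Suc k)" using VV_step Suc False by simp
    finally show ?thesis .
  qed
qed simp

lemma VV_inj: "8 \<le> j \<Longrightarrow> 8 \<le> j' \<Longrightarrow> VV j = VV j' \<Longrightarrow> j = j'"
  by (metis VV_mono less_irrefl linorder_neqE_nat)

lemma vv_inj: "i < 4 \<Longrightarrow> i' < 4 \<Longrightarrow> 2 \<le> t \<Longrightarrow> 2 \<le> t' \<Longrightarrow> vv i t = vv i' t' \<Longrightarrow> i = i' \<and> t = t'"
proof -
  assume a: "i < 4" "i' < 4" "2 \<le> t" "2 \<le> t'" "vv i t = vv i' t'"
  have "VV (4 * t + i) = vv i t" "VV (4 * t' + i') = vv i' t'" using a by (simp_all add: VV_def)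
  then have "4 * t + i = 4 * t' + i'" using VV_inj[of "4 * t + i" "4 * t' + i'"] a by simp
  then show ?thesis using a by presburger
qed


definition Hsum :: "nat \<Rightarrow> int" where "Hsum n = (\<Sum>c\<in>Hs n. lsg c)"

lemma Hsum_fix: "Hsum n = (\<Sum>c\<in>{c\<in>Hs n. FF c = c}. lsg c)"
  unfolding Hsum_def
  by (rule invol_sum[OF finite_Hs]) (use FF_props in auto)

lemma kA: "1 \<le> k \<Longrightarrow> k * (3 * k + 1) = v4 (k - 1)"
  by (cases k) (auto simp: v4_def algebra_simps)
lemma kB: "1 \<le> k \<Longrightarrow> k * (3 * k - 1) = v2 (k - 1)"
  by (cases k) (auto simp: v2_def algebra_simps)

lemma Fx_char': "{c\<in>Hs n. FF c = c} =
  {c. \<exists>t\<ge>2. (c = fixA (t + 1) \<and> 2 * n = v4 t) \<or> (c = fixB (t + 1) \<and> 2 * n = v2 t)}"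
proof -
  have "\<And>c. (c \<in> Hs n \<and> FF c = c) \<longleftrightarrow> (\<exists>t\<ge>2. (c = fixA (t + 1) \<and> 2 * n = v4 t) \<or> (c = fixB (t + 1) \<and> 2 * n = v2 t))"
  proof -
    fix c
    have "(\<exists>k\<ge>3. (c = fixA k \<and> 2 * n = k * (3 * k + 1)) \<or> (c = fixB k \<and> 2 * n = k * (3 * k - 1)))
      \<longleftrightarrow> (\<exists>t\<ge>2. (c = fixA (t + 1) \<and> 2 * n = v4 t) \<or> (c = fixB (t + 1) \<and> 2 * n = v2 t))"
    proof
      assume "\<exists>k\<ge>3. (c = fixA k \<and> 2 * n = k * (3 * k + 1)) \<or> (c = fixB k \<and> 2 * n = k * (3 * k - 1))"
      then obtain k where k: "k \<ge> 3" "(c = fixA k \<and> 2 * n = k * (3 * k + 1)) \<or> (c = fixB k \<and> 2 * n = k * (3 * k - 1))" by blast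
      then have kk: "k - 1 \<ge> 2" "k - 1 + 1 = k" by auto
      have e1: "k * (3 * k + 1) = v4 (k - 1)" "k * (3 * k - 1) = v2 (k - 1)" using kA kB k by auto
      show "\<exists>t\<ge>2. (c = fixA (t + 1) \<and> 2 * n = v4 t) \<or> (c = fixB (t + 1) \<and> 2 * n = v2 t)"
        apply (rule exI[of _ "k - 1"])
        using k e1 kk by auto
    next
      assume "\<exists>t\<ge>2. (c = fixA (t + 1) \<and> 2 * n = v4 t) \<or> (c = fixB (t + 1) \<and> 2 * n = v2 t)"
      then obtain t where t: "t \<ge> 2" "(c = fixA (t + 1) \<and> 2 * n = v4 t) \<or> (c = fixB (t + 1) \<and> 2 * n = v2 t)" by blast
      then show "\<exists>k\<ge>3. (c = fixA k \<and> 2 * n = k * (3 * k + 1)) \<or> (c = fixB k \<and> 2 * n = k * (3 * k - 1))"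
        using kA[of "t + 1"] kB[of "t + 1"] by (intro exI[of _ "t + 1"]) auto
    qed
    then show "(c \<in> Hs n \<and> FF c = c) \<longleftrightarrow> (\<exists>t\<ge>2. (c = fixA (t + 1) \<and> 2 * n = v4 t) \<or> (c = fixB (t + 1) \<and> 2 * n = v2 t))"
      using Fx_char[of c n] by simp
  qed
  then show ?thesis by blast
qed

lemma v4_inj: "2 \<le> t \<Longrightarrow> 2 \<le> t' \<Longrightarrow> v4 t = v4 t' \<Longrightarrow> t = t'"
  using vv_inj[of 3 3 t t'] by (simp add: vv_def)
lemma v2_inj: "2 \<le> t \<Longrightarrow> 2 \<le> t' \<Longrightarrow> v2 t = v2 t' \<Longrightarrow> t = t'"
  using vv_inj[of 1 1 t t'] by (simp add: vv_def)
lemma v24: "2 \<le> t \<Longrightarrow> 2 \<le> t' \<Longrightarrow> v2 t \<noteq> v4 t'"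
  using vv_inj[of 1 3 t t'] by (auto simp: vv_def)

lemma Hsum_val: "Hsum n = (if \<exists>t\<ge>2. 2 * n = v4 t then 1 else 0) - (if \<exists>t\<ge>2. 2 * n = v2 t then 1 else 0)"
proof (cases "\<exists>t\<ge>2. 2 * n = v4 t")
  case True
  then obtain t where t: "t \<ge> 2" "2 * n = v4 t" by blast
  have nB: "\<not> (\<exists>t\<ge>2. 2 * n = v2 t)" using t v24 by metis
  have "{c\<in>Hs n. FF c = c} = {fixA (t + 1)}"
    unfolding Fx_char' using t v4_inj v24 by (auto, metis+)
  then have "Hsum n = lsg (fixA (t + 1))" using Hsum_fix by simp
  also have "\<dots> = 1" by (simp add: lsg_def fixA_def sum_list_replicate)
  finally show ?thesis using True nB by simp
next
  case False
  note nA = False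
  show ?thesis
  proof (cases "\<exists>t\<ge>2. 2 * n = v2 t")
    case True
    then obtain t where t: "t \<ge> 2" "2 * n = v2 t" by blast
    have "{c\<in>Hs n. FF c = c} = {fixB (t + 1)}"
    proof
      show "{c\<in>Hs n. FF c = c} \<subseteq> {fixB (t + 1)}"
      proof
        fix c assume "c \<in> {c\<in>Hs n. FF c = c}"
        then obtain t' where t': "t' \<ge> 2" "(c = fixA (t' + 1) \<and> 2 * n = v4 t') \<or> (c = fixB (t' + 1) \<and> 2 * n = v2 t')"
          unfolding Fx_char' by blast
        then have "c = fixB (t' + 1)" "2 * n = v2 t'" using nA by auto
        then show "c \<in> {fixB (t + 1)}" using v2_inj[of t t'] t t' by simp
      qed
      show "{fixB (t + 1)} \<subseteq> {c\<in>Hs n. FF c = c}" unfolding Fx_char' using t by auto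
    qed
    then have "Hsum n = lsg (fixB (t + 1))" using Hsum_fix by simp
    also have "\<dots> = -1" by (simp add: lsg_def fixB_def sum_list_replicate)
    finally show ?thesis using True nA by simp
  next
    case False
    have E: "{c\<in>Hs n. FF c = c} = {}"
      unfolding Fx_char' using False nA by auto
    have "Hsum n = 0" using Hsum_fix[of n] unfolding E by simp
    then show ?thesis using False nA by simp
  qed
qed


definition Cg :: "nat \<Rightarrow> nat list set" where
  "Cg n = {c. 3 \<le> length c \<and> c ! 0 = 1 \<and> c ! 1 = 1 \<and> (\<forall>x\<in>set c. 1 \<le> x) \<and> 2 \<le> last c \<and> wt c = n}"

definition phi :: "nat list \<Rightarrow> nat list" where
  "phi c = (butlast c)[length c - 2 := c ! (length c - 2) + 2]"
definition psi :: "nat list \<Rightarrow> nat list" where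
  "psi d = d[length d - 1 := last d - 2] @ [2]"

lemma phi_psi:
  assumes "d \<in> Hs m"
  shows "psi d \<in> {c\<in>Cg (m + 2). last c = 2 \<and> 4 \<le> length c}" "phi (psi d) = d"
proof -
  note B = Hs_basic[OF assms]
  define k where "k = length d"
  have k3: "3 \<le> k" using B by (simp add: k_def)
  have ld: "d ! (k - 1) = last d" using last_nth'[OF B(1)] by (simp add: k_def)
  define e where "e = d[k - 1 := last d - 2]"
  have pe: "psi d = e @ [2]" by (simp add: psi_def e_def k_def)
  have le: "length e = k" by (simp add: e_def k_def)
  have ne: "\<And>i. i < k \<Longrightarrow> e ! i = (if i = k - 1 then last d - 2 else d ! i)"
    by (simp add: e_def k_def nth_list_update)
  have len: "length (psi d) = Suc k" using pe le by simp
  have pn: "\<And>i. i < k \<Longrightarrow> psi d ! i = e ! i" using pe le by (simp add: nth_append)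
  have lp: "last (psi d) = 2" using pe by simp
  have p0: "psi d ! 0 = 1" "psi d ! 1 = 1" using pn ne B k3 by auto
  have el: "\<forall>x\<in>set (psi d). 1 \<le> x"
  proof
    fix x assume "x \<in> set (psi d)"
    then have "x \<in> set e \<or> x = 2" using pe by auto
    then show "1 \<le> x"
    proof
      assume "x \<in> set e"
      then obtain i where i: "i < k" "x = e ! i" using le by (auto simp: in_set_conv_nth)
      then show ?thesis using ne[OF i(1)] B(5)[of i] B(6) by (auto simp: k_def)
    qed simp
  qed
  have w: "wt (psi d) = m + 2"
  proof -
    have "k - 1 < length d" using k3 by (simp add: k_def)
    from wt_update[OF this, of "last d - 2"]
    have w1: "wt e + k * last d = wt d + k * (last d - 2)"
      unfolding e_def[symmetric] ld using k3 by simp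
    have w2: "wt (psi d) = wt e + Suc k * 2" using pe le wt_snoc by simp
    have x: "k * last d = k * (last d - 2) + 2 * k"
    proof -
      have "2 \<le> last d" using B(6) by simp
      then obtain a where "last d = 2 + a" using le_iff_add by blast
      then show ?thesis by (simp add: algebra_simps)
    qed
    show ?thesis using w1 w2 x B(7) by simp
  qed
  show "psi d \<in> {c\<in>Cg (m + 2). last c = 2 \<and> 4 \<le> length c}"
    using len lp p0 el w k3 unfolding Cg_def by simp
  show "phi (psi d) = d"
  proof (rule nth_equalityI)
    show "length (phi (psi d)) = length d" using len by (simp add: phi_def k_def)
    fix i assume "i < length (phi (psi d))"
    then have i: "i < k" using len by (simp add: phi_def)
    have "phi (psi d) ! i = (if i = k - 1 then psi d ! (k - 1) + 2 else psi d ! i)"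
      using len i by (simp add: phi_def nth_list_update nth_butlast)
    also have "\<dots> = d ! i" using pn[OF i] pn[of "k - 1"] ne[OF i] ne[of "k - 1"] k3 i B(6) ld by auto
    finally show "phi (psi d) ! i = d ! i" .
  qed
qed

lemma psi_phi:
  assumes "c \<in> {c\<in>Cg n. last c = 2 \<and> 4 \<le> length c}"
  shows "phi c \<in> Hs (n - 2)" "psi (phi c) = c"
proof -
  have A: "4 \<le> length c" "c ! 0 = 1" "c ! 1 = 1" "\<forall>x\<in>set c. 1 \<le> x" "last c = 2" "wt c = n"
    using assms by (auto simp: Cg_def)
  define k where "k = length c"
  have k4: "4 \<le> k" using A by (simp add: k_def)
  have ne: "c \<noteq> []" using k4 k_def by auto
  have lc: "c ! (k - 1) = 2" using last_nth'[OF ne] A by (simp add: k_def)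
  define b where "b = butlast c"
  have lb: "length b = k - 1" by (simp add: b_def k_def)
  have nb: "\<And>i. i < k - 1 \<Longrightarrow> b ! i = c ! i" by (simp add: b_def nth_butlast k_def)
  have pb: "phi c = b[k - 2 := c ! (k - 2) + 2]" by (simp add: phi_def b_def k_def)
  have len: "length (phi c) = k - 1" using pb lb by simp
  have pn: "\<And>i. i < k - 1 \<Longrightarrow> phi c ! i = (if i = k - 2 then c ! (k - 2) + 2 else c ! i)"
    using pb lb nb by (simp add: nth_list_update)
  have ci: "\<And>i. i < k \<Longrightarrow> 1 \<le> c ! i" using A(4) by (simp add: k_def)
  have ne': "phi c \<noteq> []" using len k4 by auto
  have lp: "last (phi c) = c ! (k - 2) + 2"
  proof -
    have "last (phi c) = phi c ! (k - 2)" using last_nth'[OF ne'] len by (simp add: numeral_2_eq_2)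
    then show ?thesis using pn[of "k - 2"] k4 by simp
  qed
  have el: "\<forall>x\<in>set (phi c). 1 \<le> x"
  proof
    fix x assume "x \<in> set (phi c)"
    then obtain i where i: "i < k - 1" "x = phi c ! i" using len by (auto simp: in_set_conv_nth)
    then show "1 \<le> x" using pn[OF i(1)] ci[of i] by auto
  qed
  have p01: "phi c ! 0 = 1" "phi c ! 1 = 1" using pn[of 0] pn[of 1] k4 A by auto
  have w: "wt (phi c) = n - 2"
  proof -
    have w0: "wt c = wt b + k * 2" using wt_butlast[OF ne] A(5) by (simp add: b_def k_def)
    have "k - 2 < length b" using lb k4 by simp
    from wt_update[OF this, of "c ! (k - 2) + 2"]
    have w1: "wt (phi c) + Suc (k - 2) * b ! (k - 2) = wt b + Suc (k - 2) * (c ! (k - 2) + 2)"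
      unfolding pb[symmetric] .
    have "b ! (k - 2) = c ! (k - 2)" using nb[of "k - 2"] k4 by simp
    then have "wt (phi c) = wt b + Suc (k - 2) * 2" using w1 by (simp add: algebra_simps)
    moreover have "Suc (k - 2) * 2 + 2 = k * 2" using k4 by simp
    ultimately show ?thesis using w0 A(6) by simp
  qed
  show "phi c \<in> Hs (n - 2)"
    using len lp p01 el w k4 ci[of "k - 2"] unfolding Hs_def by simp
  show "psi (phi c) = c"
  proof (rule nth_equalityI)
    show "length (psi (phi c)) = length c" using len k4 by (simp add: psi_def k_def)
    fix i assume "i < length (psi (phi c))"
    then have i: "i < k" using len k4 by (simp add: psi_def)
    show "psi (phi c) ! i = c ! i"
    proof (cases "i = k - 1")
      case True
      then show ?thesis using len lc by (simp add: psi_def nth_append)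
    next
      case False
      then have i': "i < k - 1" using i by simp
      have "psi (phi c) ! i = (if i = k - 2 then last (phi c) - 2 else phi c ! i)"
        using len i' by (simp add: psi_def nth_append nth_list_update numeral_2_eq_2)
      also have "\<dots> = c ! i" using lp pn[OF i'] by auto
      finally show ?thesis .
    qed
  qed
qed

lemma Cg_split: "(\<Sum>c\<in>Cg n. lsg c) = Hsum n + Hsum (n - 2) + (if n = 9 then 1 else 0)"
  if n2: "2 \<le> n"
proof -
  have fin: "finite (Cg n)"
    by (rule finite_subset[OF _ finite_wt[of n]]) (auto simp: Cg_def)
  define L where "L = {c\<in>Cg n. last c = 2 \<and> 4 \<le> length c}"
  define L3 where "L3 = {c\<in>Cg n. last c = 2 \<and> length c = 3}"
  have split: "Cg n = Hs n \<union> L \<union> L3" by (auto simp: Cg_def Hs_def L_def L3_def)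
  have d1: "Hs n \<inter> (L \<union> L3) = {}" by (auto simp: Hs_def L_def L3_def)
  have d2: "L \<inter> L3 = {}" by (auto simp: L_def L3_def)
  have fL: "finite L" "finite L3" "finite (Hs n)" using fin split by auto
  have "(\<Sum>c\<in>Cg n. lsg c) = Hsum n + ((\<Sum>c\<in>L. lsg c) + (\<Sum>c\<in>L3. lsg c))"
    unfolding split Hsum_def using fL d1 d2
    by (simp add: sum.union_disjoint Un_assoc)
  moreover have "(\<Sum>c\<in>L. lsg c) = Hsum (n - 2)"
  proof -
    have bij: "bij_betw phi L (Hs (n - 2))"
    proof (rule bij_betw_byWitness[where f' = psi])
      show "\<forall>a\<in>L. psi (phi a) = a" using psi_phi by (auto simp: L_def)
      show "\<forall>a'\<in>Hs (n - 2). phi (psi a') = a'" using phi_psi by auto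
      show "phi ` L \<subseteq> Hs (n - 2)" using psi_phi by (auto simp: L_def)
      have nn: "n - 2 + 2 = n" using n2 by simp
      show "psi ` Hs (n - 2) \<subseteq> L" using phi_psi[of _ "n - 2", unfolded nn] by (auto simp: L_def)
    qed
    have inj: "inj_on phi L" and img: "phi ` L = Hs (n - 2)" using bij by (auto simp: bij_betw_def)
    have "Hsum (n - 2) = (\<Sum>c\<in>phi ` L. lsg c)" unfolding Hsum_def img ..
    also have "\<dots> = (\<Sum>c\<in>L. lsg (phi c))" by (simp add: sum.reindex[OF inj])
    also have "\<dots> = (\<Sum>c\<in>L. lsg c)"
    proof (rule sum.cong)
      fix c assume "c \<in> L"
      then have "psi (phi c) = c" using psi_phi by (auto simp: L_def)
      moreover have "sum_list (psi d) = sum_list d" if "d \<in> Hs m" for d m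
      proof -
        note B = Hs_basic[OF that]
        have "length d - 1 < length d" using B by simp
        from sum_list_upd[OF this, of "last d - 2"]
        have "sum_list (d[length d - 1 := last d - 2]) + last d = sum_list d + (last d - 2)"
          using last_nth'[OF B(1)] by simp
        then show ?thesis using B(6) by (simp add: psi_def)
      qed
      moreover have "phi c \<in> Hs (n - 2)" using psi_phi \<open>c \<in> L\<close> by (auto simp: L_def)
      ultimately show "lsg (phi c) = lsg c" unfolding lsg_def by metis
    qed simp
    finally show ?thesis by simp
  qed
  moreover have "(\<Sum>c\<in>L3. lsg c) = (if n = 9 then 1 else 0)"
  proof -
    have "L3 = (if n = 9 then {[1, 1, 2]} else {})"
    proof (cases "n = 9")
      case True
      have "L3 = {[1, 1, 2]}"
      proof
        show "L3 \<subseteq> {[1, 1, 2]}"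
        proof
          fix c assume "c \<in> L3"
          then have c: "length c = 3" "c ! 0 = 1" "c ! 1 = 1" "last c = 2" by (auto simp: L3_def Cg_def)
          obtain x y z where "c = [x, y, z]" using c(1) by (auto simp: numeral_3_eq_3 length_Suc_conv)
          then have "c = [1, 1, 2]" using c by simp
          then show "c \<in> {[1, 1, 2]}" by simp
        qed
        show "{[1, 1, 2]} \<subseteq> L3" using True by (simp add: L3_def Cg_def wt_def numeral_3_eq_3)
      qed
      then show ?thesis using True by simp
    next
      case False
      have "L3 = {}"
      proof (rule ccontr)
        assume "L3 \<noteq> {}"
        then obtain c where "c \<in> L3" by auto
        then have c: "length c = 3" "c ! 0 = 1" "c ! 1 = 1" "last c = 2" "wt c = n" by (auto simp: L3_def Cg_def)
        obtain x y z where "c = [x, y, z]" using c(1) by (auto simp: numeral_3_eq_3 length_Suc_conv)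
        then have "c = [1, 1, 2]" using c by simp
        then have "n = 9" using c(5) by (simp add: wt_def numeral_3_eq_3)
        then show False using False by simp
      qed
      then show ?thesis using False by simp
    qed
    then show ?thesis by (simp add: lsg_def)
  qed
  ultimately show ?thesis by simp
qed


fun expand :: "nat list \<Rightarrow> nat list" where
  "expand [] = []"
| "expand (x # xs) = map Suc (expand xs) @ replicate x 1"

fun desc :: "nat list \<Rightarrow> bool" where
  "desc (a # b # xs) = (b \<le> a \<and> a \<le> Suc b \<and> desc (b # xs))"
| "desc _ = True"

lemma wt_Cons: "wt (x # xs) = x + wt xs + sum_list xs"
proof -
  have "wt (x # xs) = (\<Sum>i<Suc (length xs). Suc i * (x # xs) ! i)" by (simp add: wt_def)
  also have "\<dots> = x + (\<Sum>i<length xs. Suc (Suc i) * xs ! i)"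
    by (subst sum.lessThan_Suc_shift) simp
  also have "(\<Sum>i<length xs. Suc (Suc i) * xs ! i) = (\<Sum>i<length xs. Suc i * xs ! i) + (\<Sum>i<length xs. xs ! i)"
    unfolding sum.distrib[symmetric] by (rule sum.cong) simp_all
  also have "(\<Sum>i<length xs. xs ! i) = sum_list xs"
    by (simp add: sum_list_sum_nth atLeast0LessThan)
  finally show ?thesis by (simp add: wt_def)
qed

lemma sum_map_Suc: "sum_list (map Suc ys) = sum_list ys + length ys"
  by (induction ys) auto

lemma expand_len: "length (expand c) = sum_list c"
  by (induction c) auto

lemma expand_sum: "sum_list (expand c) = wt c"
  by (induction c) (auto simp: sum_map_Suc expand_len wt_Cons sum_list_replicate)

lemma expand_set: "set (expand c) \<subseteq> {1..length c}"
  by (induction c) auto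

lemma expand_snoc: "expand (c @ [y]) = replicate y (Suc (length c)) @ expand c"
  by (induction c) (auto simp: map_replicate)

definition valid :: "nat list \<Rightarrow> bool" where "valid c \<longleftrightarrow> (\<forall>x\<in>set c. 1 \<le> x)"

lemma desc_iff: "desc q \<longleftrightarrow> (\<forall>j. j + 1 < length q \<longrightarrow> q ! j - q ! (j+1) \<in> {0,1} \<and> q ! j \<ge> q ! (j+1))"
proof (induction q rule: desc.induct)
  case (1 a b xs)
  have "(\<forall>j. j + 1 < length (a # b # xs) \<longrightarrow> (a # b # xs) ! j - (a # b # xs) ! (j+1) \<in> {0,1} \<and> (a # b # xs) ! j \<ge> (a # b # xs) ! (j+1))
     \<longleftrightarrow> (a - b \<in> {0,1} \<and> b \<le> a) \<and> (\<forall>j. j + 1 < length (b # xs) \<longrightarrow> (b # xs) ! j - (b # xs) ! (j+1) \<in> {0,1} \<and> (b # xs) ! j \<ge> (b # xs) ! (j+1))"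
    (is "?L \<longleftrightarrow> ?R")
  proof
    assume L: ?L
    have "a - b \<in> {0,1} \<and> b \<le> a" using L[rule_format, of 0] by simp
    moreover have "\<forall>j. j + 1 < length (b # xs) \<longrightarrow> (b # xs) ! j - (b # xs) ! (j+1) \<in> {0,1} \<and> (b # xs) ! j \<ge> (b # xs) ! (j+1)"
    proof (intro allI impI)
      fix j assume "j + 1 < length (b # xs)"
      then show "(b # xs) ! j - (b # xs) ! (j+1) \<in> {0,1} \<and> (b # xs) ! j \<ge> (b # xs) ! (j+1)"
        using L[rule_format, of "Suc j"] by simp
    qed
    ultimately show ?R by blast
  next
    assume R: ?R
    show ?L
    proof (intro allI impI)
      fix j assume j: "j + 1 < length (a # b # xs)"
      show "(a # b # xs) ! j - (a # b # xs) ! (j+1) \<in> {0,1} \<and> (a # b # xs) ! j \<ge> (a # b # xs) ! (j+1)"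
      proof (cases j)
        case 0 then show ?thesis using R by simp
      next
        case (Suc j')
        then show ?thesis using R j by auto
      qed
    qed
  qed
  moreover have "(a - b \<in> {0,1} \<and> b \<le> a) \<longleftrightarrow> (b \<le> a \<and> a \<le> Suc b)" by auto
  moreover have "desc (a # b # xs) \<longleftrightarrow> (b \<le> a \<and> a \<le> Suc b) \<and> desc (b # xs)" by simp
  ultimately show ?case using 1 by blast
qed auto

lemma desc_append: "desc (xs @ ys) \<longleftrightarrow> desc xs \<and> desc ys \<and> (xs \<noteq> [] \<and> ys \<noteq> [] \<longrightarrow> hd ys \<le> last xs \<and> last xs \<le> Suc (hd ys))"
proof (induction xs)
  case (Cons x xs)
  show ?case
  proof (cases xs)
    case Nil
    then show ?thesis by (cases ys) auto
  next
    case (Cons y ys')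
    then show ?thesis using Cons.IH by auto
  qed
qed simp

lemma desc_map_Suc: "desc (map Suc xs) = desc xs"
  by (induction xs rule: desc.induct) auto

lemma desc_rep: "desc (replicate k a)"
proof (induction k)
  case (Suc k)
  then show ?case by (cases k) auto
qed simp

lemma sum_pos: "valid c \<Longrightarrow> c \<noteq> [] \<Longrightarrow> 1 \<le> sum_list c"
  by (cases c) (auto simp: valid_def)

lemma expand_props: "valid c \<Longrightarrow> c \<noteq> [] \<Longrightarrow> desc (expand c) \<and> expand c \<noteq> [] \<and> last (expand c) = 1 \<and> hd (expand c) = length c"
proof (induction c)
  case (Cons x xs)
  have x: "1 \<le> x" using Cons(2) by (simp add: valid_def)
  show ?case
  proof (cases "xs = []")
    case True
    then show ?thesis using x by (simp add: desc_rep)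
  next
    case False
    have vx: "valid xs" using Cons(2) by (simp add: valid_def)
    note IH = Cons(1)[OF vx False]
    have "desc (map Suc (expand xs) @ replicate x 1)"
      unfolding desc_append using IH x by (simp add: desc_map_Suc desc_rep last_map hd_map)
    then show ?thesis using IH x by (simp add: hd_map)
  qed
qed simp

lemma desc_le_hd: "desc q \<Longrightarrow> v \<in> set q \<Longrightarrow> v \<le> hd q"
proof (induction q arbitrary: v rule: desc.induct)
  case (1 a b xs)
  then have "v = a \<or> v \<in> set (b # xs)" by auto
  then show ?case
  proof
    assume "v \<in> set (b # xs)"
    then have "v \<le> b" using 1 by simp
    then show ?thesis using 1 by simp
  qed simp
qed auto

lemma desc_ge_last: "desc q \<Longrightarrow> v \<in> set q \<Longrightarrow> last q \<le> v"
proof (induction q arbitrary: v rule: desc.induct)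
  case (1 a b xs)
  have lb: "last (b # xs) \<le> b" using 1 by simp
  have "v = a \<or> v \<in> set (b # xs)" using 1 by auto
  then show ?case
  proof
    assume "v = a"
    have "last (a # b # xs) = last (b # xs)" by simp
    moreover have "b \<le> a" using 1(2) by simp
    ultimately show ?thesis using lb \<open>v = a\<close> by linarith
  next
    assume "v \<in> set (b # xs)"
    then show ?thesis using 1 by simp
  qed
qed auto


lemma expand_surj: "desc q \<Longrightarrow> q \<noteq> [] \<Longrightarrow> last q = 1 \<Longrightarrow> \<exists>c. valid c \<and> c \<noteq> [] \<and> expand c = q"
proof (induction "length q" arbitrary: q rule: less_induct)
  case less
  define T where "T = takeWhile (\<lambda>v. 2 \<le> v) q"
  define R where "R = dropWhile (\<lambda>v. 2 \<le> v) q"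
  have qTR: "q = T @ R" by (simp add: T_def R_def)
  have ge1: "\<forall>v\<in>set q. 1 \<le> v" using desc_ge_last[OF less(2)] less(4) by auto
  have lq: "last q \<in> set q" using less(3) by simp
  have "\<not> 2 \<le> last q" using less(4) by simp
  then have Rne: "R \<noteq> []" unfolding R_def dropWhile_eq_Nil_conv using lq by blast
  have hR: "hd R < 2" using hd_dropWhile[of "\<lambda>v. 2 \<le> v" q] Rne by (simp add: R_def)
  have dTR: "desc T" "desc R" "T \<noteq> [] \<longrightarrow> hd R \<le> last T \<and> last T \<le> Suc (hd R)"
    using less(2) Rne unfolding qTR desc_append by auto
  have R1: "\<forall>v\<in>set R. v = 1"
  proof
    fix v assume v: "v \<in> set R"
    then have "v \<le> hd R" using desc_le_hd dTR(2) by blast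
    moreover have "1 \<le> v" using ge1 v qTR by auto
    ultimately show "v = 1" using hR by simp
  qed
  have Rrep: "replicate (length R) 1 = R" using R1 by (simp add: replicate_length_same)
  have lR: "1 \<le> length R" using Rne by (cases R) auto
  show ?case
  proof (cases "T = []")
    case True
    have "expand [length R] = q" using Rrep True qTR by simp
    then show ?thesis using lR by (intro exI[of _ "[length R]"]) (simp add: valid_def)
  next
    case False
    have T2: "\<forall>v\<in>set T. 2 \<le> v" by (auto simp: T_def dest: set_takeWhileD)
    have lT: "last T = 2"
    proof -
      have "last T \<in> set T" using False by simp
      then have "2 \<le> last T" using T2 by blast
      moreover have "last T \<le> Suc (hd R)" using dTR(3) False by blast
      ultimately show ?thesis using hR by simp
    qed
    define A where "A = map (\<lambda>v. v - 1) T"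
    have "map (Suc \<circ> (\<lambda>v. v - 1)) T = T" by (rule map_idI) (use T2 in auto)
    then have TA: "T = map Suc A" unfolding A_def by simp
    have dA: "desc A" using dTR(1) TA desc_map_Suc by simp
    have Ane: "A \<noteq> []" using False by (simp add: A_def)
    have lA: "last A = 1" using lT False by (simp add: A_def last_map)
    have "length A < length q" using qTR Rne by (simp add: A_def)
    from less(1)[OF this dA Ane lA] obtain c' where c': "valid c'" "c' \<noteq> []" "expand c' = A" by blast
    have "expand (length R # c') = q" using c' Rrep TA qTR by simp
    moreover have "valid (length R # c')" using c' lR by (simp add: valid_def)
    ultimately show ?thesis by blast
  qed
qed

lemma expand_inj: "valid c \<Longrightarrow> valid d \<Longrightarrow> expand c = expand d \<Longrightarrow> c = d"
proof (induction c arbitrary: d)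
  case Nil
  then show ?case using expand_props[of d] by (cases "d = []") auto
next
  case (Cons x xs)
  note IH = Cons.IH and pr = Cons.prems
  show ?case
  proof (cases d)
    case Nil
    then show ?thesis using pr expand_props[of "x # xs"] by auto
  next
    case (Cons y ys)
    note d = this
    have eq: "map Suc (expand xs) @ replicate x 1 = map Suc (expand ys) @ replicate y 1"
      using d pr(3) by simp
    have f: "\<And>E. filter (\<lambda>v. v = 1) (map Suc (expand E)) = []"
    proof -
      fix E
      have "\<forall>v\<in>set (map Suc (expand E)). v \<noteq> 1" using expand_set[of E] by auto
      then show "filter (\<lambda>v. v = 1) (map Suc (expand E)) = []" by (simp add: filter_empty_conv)
    qed
    have "filter (\<lambda>v. v = 1) (map Suc (expand xs) @ replicate x 1) = filter (\<lambda>v. v = 1) (map Suc (expand ys) @ replicate y 1)"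
      using eq by simp
    then have "replicate x (1::nat) = replicate y 1" using f by simp
    then have xy: "x = y" by (metis length_replicate)
    then have "map Suc (expand xs) = map Suc (expand ys)" using eq by simp
    then have "expand xs = expand ys" by (simp add: inj_map_eq_map)
    moreover have "valid xs" "valid ys" using pr(1,2) d by (auto simp: valid_def)
    ultimately have "xs = ys" using IH by blast
    then show ?thesis using xy d by simp
  qed
qed


lemma G1:
  assumes c: "c \<in> Cg n"
  shows "good_partition n (expand c)"
proof -
  have A: "3 \<le> length c" "c ! 0 = 1" "c ! 1 = 1" "valid c" "2 \<le> last c" "wt c = n"
    using c by (auto simp: Cg_def valid_def)
  obtain x0 x1 c'' where cc: "c = x0 # x1 # c''" using A(1)
    by (metis One_nat_def Suc_le_length_iff numeral_3_eq_3 Suc_le_lessD less_imp_le_nat)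
  have x01: "x0 = 1" "x1 = 1" using A cc by auto
  have c''ne: "c'' \<noteq> []" using A(1) cc by auto
  have vc'': "valid c''" using A(4) cc by (simp add: valid_def)
  have lc'': "last c'' = last c" using cc c''ne by simp
  note EP = expand_props[OF vc'' c''ne]
  define E' where "E' = butlast (expand c'')"
  have "expand c'' = butlast (expand c'') @ [last (expand c'')]"
    by (rule append_butlast_last_id[symmetric]) (use EP in simp)
  then have ec'': "expand c'' = E' @ [1]" using EP by (simp add: E'_def)
  have q: "expand c = map Suc (map Suc E') @ [3, 2, 1]" using cc x01 ec'' by simp
  have "last c'' \<le> sum_list c''" using c''ne by (simp add: member_le_sum_list)
  then have "2 \<le> length (expand c'')" using lc'' A(5) expand_len by simp
  then have E'ne: "E' \<noteq> []" using ec'' by auto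
  define q where "q = expand c"
  have lq: "length q = length E' + 3" using q by (simp add: q_def)
  have n3: "q ! (length q - 3) = 3" "q ! (length q - 2) = 2" "q ! (length q - 1) = 1"
    using q lq by (simp_all add: q_def nth_append)
  have len4: "length q \<ge> 4" using lq E'ne by (cases E') auto
  have vne: "c \<noteq> []" using cc by simp
  have dq: "desc q" using expand_props[OF A(4) vne] by (simp add: q_def)
  have q01: "q ! 0 = q ! 1"
  proof -
    have "c = butlast c @ [last c]" using vne by simp
    then have "q = replicate (last c) (Suc (length (butlast c))) @ expand (butlast c)"
      unfolding q_def by (metis expand_snoc)
    then show ?thesis using A(5) by (simp add: nth_append)
  qed
  have "sum_list q = n" using expand_sum A(6) by (simp add: q_def)
  then show ?thesis unfolding good_partition_def q_def[symmetric]
    using len4 dq[unfolded desc_iff] q01 n3 by auto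
qed

lemma G2:
  assumes g: "good_partition n q"
  shows "\<exists>c\<in>Cg n. q = expand c"
proof -
  have gp: "sum_list q = n" "length q \<ge> 4"
    "\<forall>j. j + 1 < length q \<longrightarrow> q ! j - q ! (j+1) \<in> {0,1} \<and> q ! j \<ge> q ! (j+1)"
    "q ! 0 = q ! 1" "q ! (length q - 3) = 3" "q ! (length q - 2) = 2" "q ! (length q - 1) = 1"
    using g unfolding good_partition_def by auto
  have dq: "desc q" using gp(3) desc_iff by blast
  have qne: "q \<noteq> []" using gp(2) by auto
  have lq: "last q = 1" using gp(7) qne by (simp add: last_conv_nth)
  obtain c where c: "valid c" "c \<noteq> []" "expand c = q" using expand_surj[OF dq qne lq] by blast
  have hq: "hd q = length c" using expand_props[OF c(1,2)] c(3) by simp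
  have wc: "wt c = n" using expand_sum[of c] c(3) gp(1) by simp
  have "q ! (length q - 3) \<in> set q" using gp(2) by simp
  then have "3 \<le> hd q" using desc_le_hd[OF dq] gp(5) by fastforce
  then have lc: "3 \<le> length c" using hq by simp
  obtain x0 x1 c'' where cc: "c = x0 # x1 # c''" using lc
    by (metis One_nat_def Suc_le_length_iff numeral_3_eq_3 Suc_le_lessD less_imp_le_nat)
  have vx: "1 \<le> x0" "1 \<le> x1" using c(1) cc by (auto simp: valid_def)
  define P where "P = map Suc (expand (x1 # c''))"
  have qP: "q = P @ replicate x0 1" using c(3) cc by (simp add: P_def)
  have x0: "x0 = 1"
  proof (rule ccontr)
    assume "x0 \<noteq> 1"
    then have "2 \<le> x0" using vx by simp
    then have i: "length q - 2 = length P + (x0 - 2)" using qP by simp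
    have "q ! (length P + (x0 - 2)) = 1" unfolding qP nth_append_length_plus using \<open>2 \<le> x0\<close> by simp
    then have "q ! (length q - 2) = 1" using i by simp
    then show False using gp(6) by simp
  qed
  define Q where "Q = map Suc (map Suc (expand c''))"
  have qQ: "q = Q @ replicate x1 2 @ [1]" using qP x0 by (simp add: P_def Q_def map_replicate)
  have x1: "x1 = 1"
  proof (rule ccontr)
    assume "x1 \<noteq> 1"
    then have x12: "2 \<le> x1" using vx by simp
    have i: "length q - 3 = length Q + (x1 - 2)" using qQ x12 by simp
    have "q ! (length Q + (x1 - 2)) = (replicate x1 2 @ [1]) ! (x1 - 2)"
      unfolding qQ nth_append_length_plus ..
    also have "\<dots> = 2" using x12 by (simp add: nth_append)
    finally show False using gp(5) i by simp
  qed
  have lastc: "2 \<le> last c"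
  proof (rule ccontr)
    assume "\<not> 2 \<le> last c"
    moreover have "1 \<le> last c" using c(1,2) by (simp add: valid_def)
    ultimately have l1: "last c = 1" by simp
    have "c = butlast c @ [last c]" using c(2) by simp
    then have "q = replicate (last c) (Suc (length (butlast c))) @ expand (butlast c)"
      using c(3) by (metis expand_snoc)
    then have qq: "q = Suc (length (butlast c)) # expand (butlast c)" using l1 by simp
    have bne: "butlast c \<noteq> []" using lc by (cases c) auto
    have vb: "valid (butlast c)" using c(1) by (auto simp: valid_def dest: in_set_butlastD)
    note EP = expand_props[OF vb bne]
    have "q ! 1 = expand (butlast c) ! 0" using qq by simp
    moreover have "hd (expand (butlast c)) = expand (butlast c) ! 0" by (rule hd_conv_nth) (use EP in blast)
    ultimately have "q ! 1 = hd (expand (butlast c))" by simp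
    then have "q ! 1 = length (butlast c)" using EP by simp
    moreover have "q ! 0 = Suc (length (butlast c))" using qq by simp
    ultimately show False using gp(4) by simp
  qed
  have "c \<in> Cg n" using lc cc x0 x1 c(1) lastc wc by (simp add: Cg_def valid_def)
  then show ?thesis using c(3) by blast
qed

lemma good_set: "{q. good_partition n q} = expand ` Cg n"
  using G1 G2 by blast

lemma D_eq: "int (e' n) - int (o' n) = (\<Sum>c\<in>Cg n. lsg c)"
proof -
  define S where "S = {q. good_partition n q}"
  have finC: "finite (Cg n)" by (rule finite_subset[OF _ finite_wt[of n]]) (auto simp: Cg_def)
  have inj: "inj_on expand (Cg n)" using expand_inj by (auto simp: inj_on_def Cg_def valid_def)
  have fS: "finite S" using finC good_set by (simp add: S_def)
  have "(\<Sum>q\<in>S. (-1::int) ^ length q) = (\<Sum>c\<in>Cg n. (-1::int) ^ length (expand c))"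
    unfolding S_def good_set by (simp add: sum.reindex[OF inj])
  also have "\<dots> = (\<Sum>c\<in>Cg n. lsg c)" by (simp add: lsg_def expand_len)
  finally have 1: "(\<Sum>q\<in>S. (-1::int) ^ length q) = (\<Sum>c\<in>Cg n. lsg c)" .
  have "S = {q\<in>S. even (length q)} \<union> {q\<in>S. odd (length q)}" by auto
  then have "(\<Sum>q\<in>S. (-1::int) ^ length q) = (\<Sum>q\<in>{q\<in>S. even (length q)}. (-1::int) ^ length q) + (\<Sum>q\<in>{q\<in>S. odd (length q)}. (-1::int) ^ length q)"
    using fS by (metis (no_types, lifting) sum.union_disjoint finite_Un disjoint_iff mem_Collect_eq)
  also have "\<dots> = int (card {q\<in>S. even (length q)}) - int (card {q\<in>S. odd (length q)})"
    by simp
  finally have 2: "(\<Sum>q\<in>S. (-1::int) ^ length q) = int (card {q\<in>S. even (length q)}) - int (card {q\<in>S. odd (length q)})" .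
  have "e' n = card {q\<in>S. even (length q)}" "o' n = card {q\<in>S. odd (length q)}"
    by (simp_all add: e'_def o'_def S_def)
  then show ?thesis using 1 2 by simp
qed


lemma v1_v4: "v1 (Suc T) = v4 T + 4" by (simp add: v1_def v4_def algebra_simps)
lemma v3_v2: "v3 T = v2 T + 4" by (simp add: v3_def v2_def)

lemma even_v: "even (v1 T)" "even (v2 T)" "even (v3 T)" "even (v4 T)"
proof -
  have a: "even (T * (3 * T + 1))" by (cases "even T") auto
  have b: "even ((T + 1) * (3 * T + 2))" by (cases "even T") auto
  have c: "even ((T + 1) * (3 * T + 4))" by (cases "even T") auto
  show "even (v1 T)" "even (v2 T)" "even (v3 T)" "even (v4 T)"
    using a b c by (simp_all add: v1_def v2_def v3_def v4_def)
qed

lemma half_iff: "even (X::int) \<Longrightarrow> (Y = X div 2 \<longleftrightarrow> 2 * Y = X)"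
  by auto

lemma P_iff:
  fixes t :: int
  assumes "t \<ge> 2"
  shows "int n = P1 t \<longleftrightarrow> 2 * n = v1 (nat t)"
    "int n = P2 t \<longleftrightarrow> 2 * n = v2 (nat t)"
    "int n = P3 t \<longleftrightarrow> 2 * n = v3 (nat t)"
    "int n = P4 t \<longleftrightarrow> 2 * n = v4 (nat t)"
proof -
  obtain T where T: "t = int T" using assms by (metis nonneg_int_cases order_trans zero_le_numeral)
  have e1: "int (v1 T) = 3 * t^2 + t + 4" by (simp add: T v1_def power2_eq_square algebra_simps)
  have e2: "int (v2 T) = 3 * (t + 1)^2 - t - 1" by (simp add: T v2_def power2_eq_square algebra_simps)
  have e3: "int (v3 T) = 3 * (t + 1)^2 - t + 3" by (simp add: T v3_def power2_eq_square algebra_simps)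
  have e4: "int (v4 T) = 3 * (t + 1)^2 + t + 1" by (simp add: T v4_def power2_eq_square algebra_simps)
  have ev: "even (int (v1 T))" "even (int (v2 T))" "even (int (v3 T))" "even (int (v4 T))"
    using even_v by simp_all
  show "int n = P1 t \<longleftrightarrow> 2 * n = v1 (nat t)"
  proof -
    have h: "P1 t = int (v1 T) div 2" by (simp only: P1_def e1)
    have "(int n = int (v1 T) div 2) \<longleftrightarrow> (2 * int n = int (v1 T))" by (rule half_iff[OF ev(1)])
    moreover have "(2 * int n = int (v1 T)) \<longleftrightarrow> 2 * n = v1 T"
      by (metis of_nat_eq_iff of_nat_mult of_nat_numeral)
    ultimately show ?thesis using h T by simp
  qed
  show "int n = P2 t \<longleftrightarrow> 2 * n = v2 (nat t)"
  proof -
    have h: "P2 t = int (v2 T) div 2" by (simp only: P2_def e2)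
    have "(int n = int (v2 T) div 2) \<longleftrightarrow> (2 * int n = int (v2 T))" by (rule half_iff[OF ev(2)])
    moreover have "(2 * int n = int (v2 T)) \<longleftrightarrow> 2 * n = v2 T"
      by (metis of_nat_eq_iff of_nat_mult of_nat_numeral)
    ultimately show ?thesis using h T by simp
  qed
  show "int n = P3 t \<longleftrightarrow> 2 * n = v3 (nat t)"
  proof -
    have h: "P3 t = int (v3 T) div 2" by (simp only: P3_def e3)
    have "(int n = int (v3 T) div 2) \<longleftrightarrow> (2 * int n = int (v3 T))" by (rule half_iff[OF ev(3)])
    moreover have "(2 * int n = int (v3 T)) \<longleftrightarrow> 2 * n = v3 T"
      by (metis of_nat_eq_iff of_nat_mult of_nat_numeral)
    ultimately show ?thesis using h T by simp
  qed
  show "int n = P4 t \<longleftrightarrow> 2 * n = v4 (nat t)"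
  proof -
    have h: "P4 t = int (v4 T) div 2" by (simp only: P4_def e4)
    have "(int n = int (v4 T) div 2) \<longleftrightarrow> (2 * int n = int (v4 T))" by (rule half_iff[OF ev(4)])
    moreover have "(2 * int n = int (v4 T)) \<longleftrightarrow> 2 * n = v4 T"
      by (metis of_nat_eq_iff of_nat_mult of_nat_numeral)
    ultimately show ?thesis using h T by simp
  qed
qed

lemma ex_P_iff:
  "(\<exists>t::int. t \<ge> 2 \<and> int n = P1 t) \<longleftrightarrow> (\<exists>T\<ge>2. 2 * n = v1 T)"
  "(\<exists>t::int. t \<ge> 2 \<and> int n = P2 t) \<longleftrightarrow> (\<exists>T\<ge>2. 2 * n = v2 T)"
  "(\<exists>t::int. t \<ge> 2 \<and> int n = P3 t) \<longleftrightarrow> (\<exists>T\<ge>2. 2 * n = v3 T)"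
  "(\<exists>t::int. t \<ge> 2 \<and> int n = P4 t) \<longleftrightarrow> (\<exists>T\<ge>2. 2 * n = v4 T)"
proof -
  have conv: "(\<exists>t::int. t \<ge> 2 \<and> Q (nat t)) \<longleftrightarrow> (\<exists>T\<ge>2. Q T)" for Q
  proof
    assume "\<exists>t::int. t \<ge> 2 \<and> Q (nat t)"
    then obtain t :: int where "t \<ge> 2" "Q (nat t)" by blast
    then show "\<exists>T\<ge>2. Q T" by (intro exI[of _ "nat t"]) auto
  next
    assume "\<exists>T\<ge>2. Q T"
    then obtain T where "T \<ge> 2" "Q T" by blast
    then show "\<exists>t::int. t \<ge> 2 \<and> Q (nat t)" by (intro exI[of _ "int T"]) auto
  qed
  show "(\<exists>t::int. t \<ge> 2 \<and> int n = P1 t) \<longleftrightarrow> (\<exists>T\<ge>2. 2 * n = v1 T)"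
    using conv[of "\<lambda>T. 2 * n = v1 T"] P_iff(1) by blast
  show "(\<exists>t::int. t \<ge> 2 \<and> int n = P2 t) \<longleftrightarrow> (\<exists>T\<ge>2. 2 * n = v2 T)"
    using conv[of "\<lambda>T. 2 * n = v2 T"] P_iff(2) by blast
  show "(\<exists>t::int. t \<ge> 2 \<and> int n = P3 t) \<longleftrightarrow> (\<exists>T\<ge>2. 2 * n = v3 T)"
    using conv[of "\<lambda>T. 2 * n = v3 T"] P_iff(3) by blast
  show "(\<exists>t::int. t \<ge> 2 \<and> int n = P4 t) \<longleftrightarrow> (\<exists>T\<ge>2. 2 * n = v4 T)"
    using conv[of "\<lambda>T. 2 * n = v4 T"] P_iff(4) by blast
qed

lemma D_formula:
  assumes n6: "n \<ge> 6"
  shows "int (e' n) - int (o' n) =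
    (if \<exists>T\<ge>2. 2 * n = v4 T then 1 else 0) - (if \<exists>T\<ge>2. 2 * n = v2 T then 1 else 0)
    + (if \<exists>T\<ge>3. 2 * n = v1 T then 1 else 0) - (if \<exists>T\<ge>2. 2 * n = v3 T then 1 else 0)
    + (if 2 * n = v1 2 then 1 else 0)"
proof -
  have a: "(\<exists>T\<ge>2. 2 * (n - 2) = v4 T) \<longleftrightarrow> (\<exists>T\<ge>3. 2 * n = v1 T)"
  proof
    assume "\<exists>T\<ge>2. 2 * (n - 2) = v4 T"
    then obtain T where "T \<ge> 2" "2 * (n - 2) = v4 T" by blast
    then show "\<exists>T\<ge>3. 2 * n = v1 T" using n6 v1_v4[of T] by (intro exI[of _ "Suc T"]) auto
  next
    assume "\<exists>T\<ge>3. 2 * n = v1 T"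
    then obtain T where T: "T \<ge> 3" "2 * n = v1 T" by blast
    then obtain T' where "T = Suc T'" by (cases T) auto
    then show "\<exists>T\<ge>2. 2 * (n - 2) = v4 T" using T v1_v4[of T'] by (intro exI[of _ T']) auto
  qed
  have b: "(\<exists>T\<ge>2. 2 * (n - 2) = v2 T) \<longleftrightarrow> (\<exists>T\<ge>2. 2 * n = v3 T)"
    using n6 v3_v2 by auto
  have c: "(n = 9) \<longleftrightarrow> 2 * n = v1 2" by (auto simp: v1_def)
  have "int (e' n) - int (o' n) = Hsum n + Hsum (n - 2) + (if n = 9 then 1 else 0)"
    using D_eq Cg_split n6 by simp
  then show ?thesis unfolding Hsum_val a b c by simp
qed

lemma uniqI: "i < 4 \<Longrightarrow> j < 4 \<Longrightarrow> (\<exists>T\<ge>2. 2 * n = vv i T) \<Longrightarrow> (\<exists>T\<ge>2. 2 * n = vv j T) \<Longrightarrow> i = j"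
proof -
  assume a: "i < 4" "j < 4" "\<exists>T\<ge>2. 2 * n = vv i T" "\<exists>T\<ge>2. 2 * n = vv j T"
  then obtain T T' where "T \<ge> 2" "2 * n = vv i T" "T' \<ge> 2" "2 * n = vv j T'" by blast
  then show "i = j" using vv_inj[of i j T T'] a(1,2) by simp
qed

lemma vv_simps: "vv 0 T = v1 T" "vv 1 T = v2 T" "vv 2 T = v3 T" "vv 3 T = v4 T"
  by (simp_all add: vv_def)

lemma excl_gen: "(\<exists>T\<ge>2. 2 * n = vv i T) \<and> (\<exists>T\<ge>2. 2 * n = vv j T) \<Longrightarrow> i < 4 \<Longrightarrow> j < 4 \<Longrightarrow> i = j"
  using uniqI by blast

lemma excl1: "\<not> ((\<exists>T\<ge>2. 2 * n = v1 T) \<and> (\<exists>T\<ge>2. 2 * n = v2 T))"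
proof
  assume h: "(\<exists>T\<ge>2. 2 * n = v1 T) \<and> (\<exists>T\<ge>2. 2 * n = v2 T)"
  show False using excl_gen[of n 0 1, unfolded vv_simps] h by simp
qed

lemma excl2: "\<not> ((\<exists>T\<ge>2. 2 * n = v1 T) \<and> (\<exists>T\<ge>2. 2 * n = v3 T))"
proof
  assume h: "(\<exists>T\<ge>2. 2 * n = v1 T) \<and> (\<exists>T\<ge>2. 2 * n = v3 T)"
  show False using excl_gen[of n 0 2, unfolded vv_simps] h by simp
qed

lemma excl3: "\<not> ((\<exists>T\<ge>2. 2 * n = v1 T) \<and> (\<exists>T\<ge>2. 2 * n = v4 T))"
proof
  assume h: "(\<exists>T\<ge>2. 2 * n = v1 T) \<and> (\<exists>T\<ge>2. 2 * n = v4 T)"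
  show False using excl_gen[of n 0 3, unfolded vv_simps] h by simp
qed

lemma excl4: "\<not> ((\<exists>T\<ge>2. 2 * n = v2 T) \<and> (\<exists>T\<ge>2. 2 * n = v3 T))"
proof
  assume h: "(\<exists>T\<ge>2. 2 * n = v2 T) \<and> (\<exists>T\<ge>2. 2 * n = v3 T)"
  show False using excl_gen[of n 1 2, unfolded vv_simps] h by simp
qed

lemma excl5: "\<not> ((\<exists>T\<ge>2. 2 * n = v2 T) \<and> (\<exists>T\<ge>2. 2 * n = v4 T))"
proof
  assume h: "(\<exists>T\<ge>2. 2 * n = v2 T) \<and> (\<exists>T\<ge>2. 2 * n = v4 T)"
  show False using excl_gen[of n 1 3, unfolded vv_simps] h by simp
qed

lemma excl6: "\<not> ((\<exists>T\<ge>2. 2 * n = v3 T) \<and> (\<exists>T\<ge>2. 2 * n = v4 T))"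
proof
  assume h: "(\<exists>T\<ge>2. 2 * n = v3 T) \<and> (\<exists>T\<ge>2. 2 * n = v4 T)"
  show False using excl_gen[of n 2 3, unfolded vv_simps] h by simp
qed

lemmas excl = excl1 excl2 excl3 excl4 excl5 excl6

lemma v1_inj: "2 \<le> T \<Longrightarrow> 2 \<le> T' \<Longrightarrow> v1 T = v1 T' \<Longrightarrow> T = T'"
  using vv_inj[of 0 0 T T'] by (simp add: vv_def)

theorem corollary4p9:
  fixes n :: nat
  assumes "n \<ge> 6"
  shows "((\<forall>t::int. t \<ge> 2 \<longrightarrow> int n \<notin> {P1 t, P2 t, P3 t, P4 t}) \<longrightarrow> e' n = o' n)
       \<and> ((\<exists>t::int. t \<ge> 2 \<and> (int n = P1 t \<or> int n = P4 t)) \<longrightarrow> e' n = o' n + 1)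
       \<and> ((\<exists>t::int. t \<ge> 2 \<and> (int n = P2 t \<or> int n = P3 t)) \<longrightarrow> int (e' n) = int (o' n) - 1)"
proof (intro conjI impI)
  note D = D_formula[OF assms]
  note E = ex_P_iff[of n]
  note X = excl[of n]
  have split1: "(\<exists>T\<ge>2. 2 * n = v1 T) \<longleftrightarrow> (\<exists>T\<ge>3. 2 * n = v1 T) \<or> 2 * n = v1 2"
  proof
    assume "\<exists>T\<ge>2. 2 * n = v1 T"
    then obtain T where "T \<ge> 2" "2 * n = v1 T" by blast
    then show "(\<exists>T\<ge>3. 2 * n = v1 T) \<or> 2 * n = v1 2"
      by (cases "T = 2") (auto intro!: exI[of _ T])
  next
    assume "(\<exists>T\<ge>3. 2 * n = v1 T) \<or> 2 * n = v1 2"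
    then show "\<exists>T\<ge>2. 2 * n = v1 T"
    proof
      assume "\<exists>T\<ge>3. 2 * n = v1 T"
      then obtain T where "T \<ge> 3" "2 * n = v1 T" by blast
      then show ?thesis by (intro exI[of _ T]) auto
    next
      assume "2 * n = v1 2"
      then show ?thesis by (intro exI[of _ 2]) auto
    qed
  qed
  have split2: "\<not> ((\<exists>T\<ge>3. 2 * n = v1 T) \<and> 2 * n = v1 2)"
  proof
    assume "(\<exists>T\<ge>3. 2 * n = v1 T) \<and> 2 * n = v1 2"
    then obtain T where "T \<ge> 3" "v1 T = v1 2" by auto
    then show False using v1_inj[of T 2] by simp
  qed
  {
    assume h: "\<forall>t::int. t \<ge> 2 \<longrightarrow> int n \<notin> {P1 t, P2 t, P3 t, P4 t}"
    have n1: "\<not> (\<exists>T\<ge>2. 2 * n = v1 T)" using E(1) h by blast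
    have n2: "\<not> (\<exists>T\<ge>2. 2 * n = v2 T)" using E(2) h by blast
    have n3: "\<not> (\<exists>T\<ge>2. 2 * n = v3 T)" using E(3) h by blast
    have n4: "\<not> (\<exists>T\<ge>2. 2 * n = v4 T)" using E(4) h by blast
    have n1': "\<not> (\<exists>T\<ge>3. 2 * n = v1 T)" "2 * n \<noteq> v1 2" using n1 split1 by auto
    have "int (e' n) - int (o' n) = 0" using D n1' n2 n3 n4 by simp
    then show "e' n = o' n" by simp
  }
  {
    assume "\<exists>t::int. t \<ge> 2 \<and> (int n = P1 t \<or> int n = P4 t)"
    then have "(\<exists>T\<ge>2. 2 * n = v1 T) \<or> (\<exists>T\<ge>2. 2 * n = v4 T)" using E(1,4) by blast
    then have "int (e' n) - int (o' n) = 1"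
    proof
      assume a: "\<exists>T\<ge>2. 2 * n = v1 T"
      have n2: "\<not> (\<exists>T\<ge>2. 2 * n = v2 T)" using a X(1) by blast
      have n3: "\<not> (\<exists>T\<ge>2. 2 * n = v3 T)" using a X(2) by blast
      have n4: "\<not> (\<exists>T\<ge>2. 2 * n = v4 T)" using a X(3) by blast
      from a split1 have "(\<exists>T\<ge>3. 2 * n = v1 T) \<or> 2 * n = v1 2" by blast
      then show ?thesis
      proof
        assume b: "\<exists>T\<ge>3. 2 * n = v1 T"
        then have "2 * n \<noteq> v1 2" using split2 by blast
        then show ?thesis using D b n2 n3 n4 by simp
      next
        assume b: "2 * n = v1 2"
        then have "\<not> (\<exists>T\<ge>3. 2 * n = v1 T)" using split2 by blast
        then show ?thesis using D b n2 n3 n4 by simp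
      qed
    next
      assume a: "\<exists>T\<ge>2. 2 * n = v4 T"
      have n1: "\<not> (\<exists>T\<ge>2. 2 * n = v1 T)" using a X(3) by blast
      have n2: "\<not> (\<exists>T\<ge>2. 2 * n = v2 T)" using a X(5) by blast
      have n3: "\<not> (\<exists>T\<ge>2. 2 * n = v3 T)" using a X(6) by blast
      have n1': "\<not> (\<exists>T\<ge>3. 2 * n = v1 T)" "2 * n \<noteq> v1 2" using n1 split1 by auto
      show ?thesis using D n1' n2 n3 a by simp
    qed
    then show "e' n = o' n + 1" by simp
  }
  {
    assume "\<exists>t::int. t \<ge> 2 \<and> (int n = P2 t \<or> int n = P3 t)"
    then have "(\<exists>T\<ge>2. 2 * n = v2 T) \<or> (\<exists>T\<ge>2. 2 * n = v3 T)" using E(2,3) by blast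
    then have "int (e' n) - int (o' n) = -1"
    proof
      assume a: "\<exists>T\<ge>2. 2 * n = v2 T"
      have n1: "\<not> (\<exists>T\<ge>2. 2 * n = v1 T)" using a X(1) by blast
      have n3: "\<not> (\<exists>T\<ge>2. 2 * n = v3 T)" using a X(4) by blast
      have n4: "\<not> (\<exists>T\<ge>2. 2 * n = v4 T)" using a X(5) by blast
      have n1': "\<not> (\<exists>T\<ge>3. 2 * n = v1 T)" "2 * n \<noteq> v1 2" using n1 split1 by auto
      show ?thesis using D n1' n3 n4 a by simp
    next
      assume a: "\<exists>T\<ge>2. 2 * n = v3 T"
      have n1: "\<not> (\<exists>T\<ge>2. 2 * n = v1 T)" using a X(2) by blast
      have n2: "\<not> (\<exists>T\<ge>2. 2 * n = v2 T)" using a X(4) by blast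
      have n4: "\<not> (\<exists>T\<ge>2. 2 * n = v4 T)" using a X(6) by blast
      have n1': "\<not> (\<exists>T\<ge>3. 2 * n = v1 T)" "2 * n \<noteq> v1 2" using n1 split1 by auto
      show ?thesis using D n1' n2 n4 a by simp
    qed
    then show "int (e' n) = int (o' n) - 1" by simp
  }
qed


end
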